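(* Let $X$ be a Stone space and $G$ a topological subgroup of $\mathrm{Homeo}(X)$. Then: (1) the action $\alpha:G\times V\to V$, $\alpha(g,A)=g(A)$, induces a topological group embedding $i_\alpha:G\hookrightarrow \mathrm{Aut}(V)$; (2) the evaluation map $\delta:X\to V^*$, $x\mapsto\delta_x$, $\delta_x(f)=f(x)$, is a topological embedding which is $G$-equivariant (with respect to the action $\beta$ below); (3) the action $\beta:G\times V^*\to V^*$, $(gf)(A)=f(g^{-1}(A))$, is continuous and induces a topological group embedding $i_\beta:G\hookrightarrow\mathrm{Aut}(V^* )$; (4) the pair $\psi=(\alpha,\beta)$ is a $t$-exact birepresentation of $G$ on the evaluation map $w:V\times V^*\to\mathbb{Z}_2$, $w(A,f)=f(A)$.
   Context: A Stone space is a compact zero-dimensional Hausdorff space; $\mathrm{Homeo}(X)$ carries the compact-open topology. $V=C(X,\mathbb{Z}_2)$, identified with the group of clopen subsets of $X$ under symmetric difference, is discrete; $V^*=\mathrm{Hom}(V,\mathbb{Z}_2)$ carries the topology of pointwise convergence (compact). For a locally compact group $Y$, $\mathrm{Aut}(Y)$ carries the Birkhoff topology, with local base at the identity the sets $\{f\in\mathrm{Aut}(Y): f(y)\in Oy,\ f^{-1}(y)\in Oy\ \forall y\in K\}$ ($K$ compact, $O$ a neighborhood of the identity); for discrete $Y$ it is the pointwise topology and for compact $Y$ the compact-open topology. Given a continuous biadditive map $w:E\times F\to A$ of abelian topological groups, a continuous birepresentation of a topological group $G$ on $w$ is a pair $(\alpha_1,\alpha_2)$ of continuous actions of $G$ by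 automorphisms on $E$ and on $F$ with $w(gx,gf)=w(x,f)$. It is $t$-exact if $\ker\alpha_1\cap\ker\alpha_2=\{e\}$ and for no strictly coarser Hausdorff group topology on $G$ do both actions remain continuous. *)

theory Defs
  imports "HOL-Analysis.Analysis"
begin

definition stone_space :: "'a topology \<Rightarrow> bool" where
  "stone_space T \<longleftrightarrow> compact_space T \<and> Hausdorff_space T \<and>
     (\<forall>U x. openin T U \<and> x \<in> U \<longrightarrow>
        (\<exists>C. openin T C \<and> closedin T C \<and> x \<in> C \<and> C \<subseteq> U))"

text \<open>Homeo(X): homeomorphisms of the topspace, extended by the identity outside it.\<close>
definition Homeo :: "'a topology \<Rightarrow> ('a \<Rightarrow> 'a) set" where
  "Homeo T = {g. homeomorphic_map T T g \<and> (\<forall>x. x \<notin> topspace T \<longrightarrow> g x = x)}"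

definition compact_open_homeo :: "'a topology \<Rightarrow> ('a \<Rightarrow> 'a) topology" where
  "compact_open_homeo T = topology_generated_by
     {{g \<in> Homeo T. g ` K \<subseteq> U} | K U. compactin T K \<and> openin T U}"

definition topological_subgroup_Homeo :: "'a topology \<Rightarrow> ('a \<Rightarrow> 'a) set \<Rightarrow> bool" where
  "topological_subgroup_Homeo T G \<longleftrightarrow> G \<subseteq> Homeo T \<and> id \<in> G \<and>
     (\<forall>g\<in>G. \<forall>h\<in>G. g \<circ> h \<in> G) \<and> (\<forall>g\<in>G. inv g \<in> G)"

definition Gtop :: "'a topology \<Rightarrow> ('a \<Rightarrow> 'a) set \<Rightarrow> ('a \<Rightarrow> 'a) topology" where
  "Gtop T G = subtopology (compact_open_homeo T) G"

section \<open>V = C(X,Z2) as clopen sets, and its dual V*\<close>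

definition symdiff :: "'a set \<Rightarrow> 'a set \<Rightarrow> 'a set" where
  "symdiff A B = (A - B) \<union> (B - A)"

definition clopens :: "'a topology \<Rightarrow> 'a set set" where
  "clopens T = {A. openin T A \<and> closedin T A}"

text \<open>Z2 is modelled as bool with addition = exclusive or.\<close>
definition dualV :: "'a topology \<Rightarrow> ('a set \<Rightarrow> bool) set" where
  "dualV T = {f. (\<forall>A\<in>clopens T. \<forall>B\<in>clopens T. f (symdiff A B) = (f A \<noteq> f B)) \<and>
                 (\<forall>A. A \<notin> clopens T \<longrightarrow> f A = False)}"

definition dualV_top :: "'a topology \<Rightarrow> ('a set \<Rightarrow> bool) topology" where
  "dualV_top T = topology_generated_by
     {{f \<in> dualV T. f A = b} | A b. A \<in> clopens T}"

definition Vtop :: "'a topology \<Rightarrow> 'a set topology" where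
  "Vtop T = discrete_topology (clopens T)"

definition dual_add :: "('a set \<Rightarrow> bool) \<Rightarrow> ('a set \<Rightarrow> bool) \<Rightarrow> ('a set \<Rightarrow> bool)" where
  "dual_add f h = (\<lambda>A. f A \<noteq> h A)"

text \<open>Aut(Y) for an abelian topological group Y with carrier topspace Y, operation mul:
  topological group automorphisms, extended by the identity outside the carrier.\<close>
definition Aut :: "'y topology \<Rightarrow> ('y \<Rightarrow> 'y \<Rightarrow> 'y) \<Rightarrow> ('y \<Rightarrow> 'y) set" where
  "Aut Y mul = {f. homeomorphic_map Y Y f \<and>
      (\<forall>x\<in>topspace Y. \<forall>y\<in>topspace Y. f (mul x y) = mul (f x) (f y)) \<and>
      (\<forall>y. y \<notin> topspace Y \<longrightarrow> f y = y)}"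

definition birkhoff_nbhd :: "'y topology \<Rightarrow> ('y \<Rightarrow> 'y \<Rightarrow> 'y) \<Rightarrow> 'y set \<Rightarrow> 'y set \<Rightarrow> ('y \<Rightarrow> 'y) set" where
  "birkhoff_nbhd Y mul K W = {f \<in> Aut Y mul. \<forall>y\<in>K.
      f y \<in> (\<lambda>u. mul u y) ` W \<and> inv f y \<in> (\<lambda>u. mul u y) ` W}"

definition birkhoff_top :: "'y topology \<Rightarrow> ('y \<Rightarrow> 'y \<Rightarrow> 'y) \<Rightarrow> 'y \<Rightarrow> ('y \<Rightarrow> 'y) topology" where
  "birkhoff_top Y mul e = topology_generated_by
     {(\<lambda>f. h \<circ> f) ` birkhoff_nbhd Y mul K W | h K W.
        h \<in> Aut Y mul \<and> compactin Y K \<and> openin Y W \<and> e \<in> W}"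

definition top_group_embedding ::
  "('g \<Rightarrow> 'g) topology \<Rightarrow> ('h \<Rightarrow> 'h) topology \<Rightarrow> (('g \<Rightarrow> 'g) \<Rightarrow> ('h \<Rightarrow> 'h)) \<Rightarrow> bool" where
  "top_group_embedding TG TH i \<longleftrightarrow>
     (\<forall>g\<in>topspace TG. \<forall>h\<in>topspace TG. i (g \<circ> h) = i g \<circ> i h) \<and>
     embedding_map TG TH i"

definition act_alpha :: "'a topology \<Rightarrow> ('a \<Rightarrow> 'a) \<Rightarrow> 'a set \<Rightarrow> 'a set" where
  "act_alpha T g A = (if A \<in> clopens T then g ` A else A)"

definition act_beta :: "'a topology \<Rightarrow> ('a \<Rightarrow> 'a) \<Rightarrow> ('a set \<Rightarrow> bool) \<Rightarrow> ('a set \<Rightarrow> bool)" where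
  "act_beta T g f = (if f \<in> dualV T then (\<lambda>A. if A \<in> clopens T then f (inv g ` A) else False) else f)"

definition delta :: "'a topology \<Rightarrow> 'a \<Rightarrow> ('a set \<Rightarrow> bool)" where
  "delta T x = (\<lambda>A. if A \<in> clopens T then x \<in> A else False)"

definition eval_w :: "'a set \<Rightarrow> ('a set \<Rightarrow> bool) \<Rightarrow> bool" where
  "eval_w A f = f A"

definition hausdorff_group_topology :: "('g \<Rightarrow> 'g) set \<Rightarrow> ('g \<Rightarrow> 'g) topology \<Rightarrow> bool" where
  "hausdorff_group_topology G \<tau> \<longleftrightarrow> topspace \<tau> = G \<and> Hausdorff_space \<tau> \<and>
     continuous_map (prod_topology \<tau> \<tau>) \<tau> (\<lambda>(g,h). g \<circ> h) \<and>
     continuous_map \<tau> \<tau> inv"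

definition cont_action_aut ::
  "('g \<Rightarrow> 'g) topology \<Rightarrow> 'e topology \<Rightarrow> ('e \<Rightarrow> 'e \<Rightarrow> 'e) \<Rightarrow> (('g \<Rightarrow> 'g) \<Rightarrow> 'e \<Rightarrow> 'e) \<Rightarrow> bool" where
  "cont_action_aut \<tau> E addE act \<longleftrightarrow>
     continuous_map (prod_topology \<tau> E) E (\<lambda>(g,x). act g x) \<and>
     (\<forall>x\<in>topspace E. act id x = x) \<and>
     (\<forall>g\<in>topspace \<tau>. \<forall>h\<in>topspace \<tau>. \<forall>x\<in>topspace E. act (g \<circ> h) x = act g (act h x)) \<and>
     (\<forall>g\<in>topspace \<tau>. \<forall>x\<in>topspace E. \<forall>y\<in>topspace E. act g (addE x y) = addE (act g x) (act g y))"

definition cont_biadditive ::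
  "'e topology \<Rightarrow> ('e \<Rightarrow> 'e \<Rightarrow> 'e) \<Rightarrow> 'f topology \<Rightarrow> ('f \<Rightarrow> 'f \<Rightarrow> 'f) \<Rightarrow>
   'c topology \<Rightarrow> ('c \<Rightarrow> 'c \<Rightarrow> 'c) \<Rightarrow> ('e \<Rightarrow> 'f \<Rightarrow> 'c) \<Rightarrow> bool" where
  "cont_biadditive E addE F addF C addC w \<longleftrightarrow>
     continuous_map (prod_topology E F) C (\<lambda>(x,f). w x f) \<and>
     (\<forall>x\<in>topspace E. \<forall>y\<in>topspace E. \<forall>f\<in>topspace F. w (addE x y) f = addC (w x f) (w y f)) \<and>
     (\<forall>x\<in>topspace E. \<forall>f\<in>topspace F. \<forall>h\<in>topspace F. w x (addF f h) = addC (w x f) (w x h))"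

definition cont_birep ::
  "('g \<Rightarrow> 'g) topology \<Rightarrow> 'e topology \<Rightarrow> ('e \<Rightarrow> 'e \<Rightarrow> 'e) \<Rightarrow> 'f topology \<Rightarrow> ('f \<Rightarrow> 'f \<Rightarrow> 'f) \<Rightarrow>
   'c topology \<Rightarrow> ('c \<Rightarrow> 'c \<Rightarrow> 'c) \<Rightarrow> ('e \<Rightarrow> 'f \<Rightarrow> 'c) \<Rightarrow>
   (('g \<Rightarrow> 'g) \<Rightarrow> 'e \<Rightarrow> 'e) \<Rightarrow> (('g \<Rightarrow> 'g) \<Rightarrow> 'f \<Rightarrow> 'f) \<Rightarrow> bool" where
  "cont_birep \<tau> E addE F addF C addC w a1 a2 \<longleftrightarrow>
     cont_biadditive E addE F addF C addC w \<and>
     cont_action_aut \<tau> E addE a1 \<and> cont_action_aut \<tau> F addF a2 \<and>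
     (\<forall>g\<in>topspace \<tau>. \<forall>x\<in>topspace E. \<forall>f\<in>topspace F. w (a1 g x) (a2 g f) = w x f)"

definition t_exact_birep ::
  "('g \<Rightarrow> 'g) topology \<Rightarrow> 'e topology \<Rightarrow> ('e \<Rightarrow> 'e \<Rightarrow> 'e) \<Rightarrow> 'f topology \<Rightarrow> ('f \<Rightarrow> 'f \<Rightarrow> 'f) \<Rightarrow>
   'c topology \<Rightarrow> ('c \<Rightarrow> 'c \<Rightarrow> 'c) \<Rightarrow> ('e \<Rightarrow> 'f \<Rightarrow> 'c) \<Rightarrow>
   (('g \<Rightarrow> 'g) \<Rightarrow> 'e \<Rightarrow> 'e) \<Rightarrow> (('g \<Rightarrow> 'g) \<Rightarrow> 'f \<Rightarrow> 'f) \<Rightarrow> bool" where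
  "t_exact_birep \<tau> E addE F addF C addC w a1 a2 \<longleftrightarrow>
     cont_birep \<tau> E addE F addF C addC w a1 a2 \<and>
     {g \<in> topspace \<tau>. (\<forall>x\<in>topspace E. a1 g x = x) \<and> (\<forall>f\<in>topspace F. a2 g f = f)} = {id} \<and>
     \<not> (\<exists>\<sigma>. hausdorff_group_topology (topspace \<tau>) \<sigma> \<and>
           (\<forall>U. openin \<sigma> U \<longrightarrow> openin \<tau> U) \<and> \<sigma> \<noteq> \<tau> \<and>
           continuous_map (prod_topology \<sigma> E) E (\<lambda>(g,x). a1 g x) \<and>
           continuous_map (prod_topology \<sigma> F) F (\<lambda>(g,f). a2 g f))"

end

theory Submission
  imports Defs
begin


locale stoneG =
  fixes T :: "'a topology" and G :: "('a \<Rightarrow> 'a) set"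
  assumes stone: "stone_space T" and sub: "topological_subgroup_Homeo T G"
begin

lemma G_homeo: "g \<in> G \<Longrightarrow> g \<in> Homeo T"
  using sub unfolding topological_subgroup_Homeo_def by auto
lemma G_id: "id \<in> G"
  using sub unfolding topological_subgroup_Homeo_def by auto
lemma G_comp: "g \<in> G \<Longrightarrow> h \<in> G \<Longrightarrow> g \<circ> h \<in> G"
  using sub unfolding topological_subgroup_Homeo_def by auto
lemma G_inv: "g \<in> G \<Longrightarrow> inv g \<in> G"
  using sub unfolding topological_subgroup_Homeo_def by auto
lemma G_hm: "g \<in> G \<Longrightarrow> homeomorphic_map T T g"
  using G_homeo unfolding Homeo_def by auto
lemma G_out: "g \<in> G \<Longrightarrow> x \<notin> topspace T \<Longrightarrow> g x = x"
  using G_homeo unfolding Homeo_def by auto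
lemma G_image_X: "g \<in> G \<Longrightarrow> g ` topspace T = topspace T"
  using G_hm homeomorphic_imp_surjective_map by blast
lemma G_memX: assumes "g \<in> G" shows "g z \<in> topspace T \<longleftrightarrow> z \<in> topspace T"
proof (cases "z \<in> topspace T")
  case True then show ?thesis using G_image_X[OF assms] by blast
next
  case False then show ?thesis using G_out[OF assms False] by simp
qed

lemma G_bij: assumes "g \<in> G" shows "bij g"
proof -
  have inj: "inj_on g (topspace T)" using G_hm[OF assms] homeomorphic_imp_injective_map by blast
  have im: "g ` topspace T = topspace T" using G_image_X[OF assms] .
  have "inj g"
  proof (rule injI)
    fix x y assume e: "g x = g y"
    show "x = y"
    proof (cases "x \<in> topspace T")
      case True
      then have "y \<in> topspace T" using G_memX[OF assms, of x] G_memX[OF assms, of y] e by simp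
      then show ?thesis using inj e True by (meson inj_onD)
    next
      case False
      then have "y \<notin> topspace T" using G_memX[OF assms, of x] G_memX[OF assms, of y] e by simp
      then show ?thesis using e False G_out[OF assms] by metis
    qed
  qed
  moreover have "surj g"
  proof -
    { fix y have "y \<in> range g"
      proof (cases "y \<in> topspace T")
        case True then show ?thesis using im by blast
      next
        case False then show ?thesis using G_out[OF assms False] by (metis rangeI)
      qed }
    then show ?thesis by blast
  qed
  ultimately show ?thesis by (simp add: bij_def)
qed

lemma G_inv_f [simp]: "g \<in> G \<Longrightarrow> inv g (g x) = x"
  using G_bij bij_is_inj inv_f_f by metis
lemma G_f_inv [simp]: "g \<in> G \<Longrightarrow> g (inv g x) = x"
  using G_bij bij_is_surj surj_f_inv_f by metis
lemma G_img_inv_img [simp]: "g \<in> G \<Longrightarrow> g ` (inv g ` A) = A"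
  by (force simp: image_iff)
lemma G_inv_img_img [simp]: "g \<in> G \<Longrightarrow> inv g ` (g ` A) = A"
  by (force simp: image_iff)
lemma G_inj: "g \<in> G \<Longrightarrow> inj g"
  using G_bij bij_is_inj by blast
lemma G_comp_inv: "g \<in> G \<Longrightarrow> h \<in> G \<Longrightarrow> inv (g \<circ> h) = inv h \<circ> inv g"
  using G_bij o_inv_distrib by blast

lemma clopen_sub: "A \<in> clopens T \<Longrightarrow> A \<subseteq> topspace T"
  unfolding clopens_def using openin_subset by blast

lemma clopen_image: assumes "g \<in> G" "A \<in> clopens T" shows "g ` A \<in> clopens T"
  using assms clopen_sub[OF assms(2)] homeomorphic_map_openness[OF G_hm[OF assms(1)]]
    homeomorphic_map_closedness[OF G_hm[OF assms(1)]] unfolding clopens_def by auto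

lemma clopen_inv_image: "g \<in> G \<Longrightarrow> A \<in> clopens T \<Longrightarrow> inv g ` A \<in> clopens T"
  using clopen_image G_inv by blast

lemma clopen_empty [simp]: "{} \<in> clopens T"
  unfolding clopens_def by auto
lemma clopen_X [simp]: "topspace T \<in> clopens T"
  unfolding clopens_def by auto
lemma clopen_diff: "A \<in> clopens T \<Longrightarrow> B \<in> clopens T \<Longrightarrow> A - B \<in> clopens T"
  unfolding clopens_def by (auto intro: openin_diff closedin_diff)
lemma clopen_Un: "A \<in> clopens T \<Longrightarrow> B \<in> clopens T \<Longrightarrow> A \<union> B \<in> clopens T"
  unfolding clopens_def by auto
lemma clopen_symdiff: "A \<in> clopens T \<Longrightarrow> B \<in> clopens T \<Longrightarrow> symdiff A B \<in> clopens T"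
  unfolding symdiff_def by (intro clopen_Un clopen_diff)
lemma clopen_compl: "A \<in> clopens T \<Longrightarrow> topspace T - A \<in> clopens T"
  by (simp add: clopen_diff)

lemma clopen_base: "openin T U \<Longrightarrow> x \<in> U \<Longrightarrow> \<exists>C\<in>clopens T. x \<in> C \<and> C \<subseteq> U"
  using stone unfolding stone_space_def clopens_def by blast

lemma sep: assumes "x \<in> topspace T" "y \<in> topspace T" "x \<noteq> y"
  shows "\<exists>C\<in>clopens T. x \<in> C \<and> y \<notin> C"
proof -
  have "Hausdorff_space T" using stone stone_space_def by blast
  then obtain U V where "openin T U" "openin T V" "x \<in> U" "y \<in> V" "disjnt U V"
    using assms unfolding Hausdorff_space_def by blast
  then obtain C where "C \<in> clopens T" "x \<in> C" "C \<subseteq> U" using clopen_base by blast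
  then show ?thesis using \<open>y \<in> V\<close> \<open>disjnt U V\<close> by (auto simp: disjnt_def)
qed

lemma clopen_between: assumes "compactin T K" "openin T U" "K \<subseteq> U"
  shows "\<exists>C\<in>clopens T. K \<subseteq> C \<and> C \<subseteq> U"
proof -
  let ?U = "{C \<in> clopens T. C \<subseteq> U}"
  have "\<forall>C\<in>?U. openin T C" unfolding clopens_def by auto
  moreover have "K \<subseteq> \<Union>?U" using assms clopen_base by blast
  ultimately obtain F where F: "finite F" "F \<subseteq> ?U" "K \<subseteq> \<Union>F"
    using assms(1) unfolding compactin_def by meson
  have "\<Union>F \<in> clopens T" using F unfolding clopens_def
    by (auto intro!: openin_Union closedin_Union)
  then show ?thesis using F by blast
qed

lemma compact_X: "compactin T (topspace T)"
  using stone unfolding stone_space_def compact_space_def by blast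

lemma clopen_compact: "A \<in> clopens T \<Longrightarrow> compactin T A"
  using closed_compactin[OF compact_X] clopen_sub unfolding clopens_def by blast

lemma topspace_co: "topspace (compact_open_homeo T) = Homeo T"
proof -
  have "Homeo T \<in> {{g \<in> Homeo T. g ` K \<subseteq> U} | K U. compactin T K \<and> openin T U}"
    by (rule CollectI, rule exI[of _ "{}"], rule exI[of _ "topspace T"]) auto
  then show ?thesis unfolding compact_open_homeo_def by auto
qed

lemma topspace_Gtop [simp]: "topspace (Gtop T G) = G"
  unfolding Gtop_def using topspace_co G_homeo by auto

definition nb :: "('a \<Rightarrow> 'a) \<Rightarrow> 'a set set \<Rightarrow> ('a \<Rightarrow> 'a) set" where
  "nb g F = {g' \<in> G. \<forall>A\<in>F. g' ` A = g ` A}"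

lemma O_open: assumes A: "A \<in> clopens T" and B: "B \<in> clopens T"
  shows "openin (Gtop T G) {g \<in> G. g ` A = B}"
proof -
  let ?S1 = "{g \<in> Homeo T. g ` A \<subseteq> B}"
  let ?S2 = "{g \<in> Homeo T. g ` (topspace T - A) \<subseteq> topspace T - B}"
  have o1: "openin (compact_open_homeo T) ?S1" unfolding compact_open_homeo_def
    by (rule topology_generated_by_Basis) (use A B clopen_compact clopens_def in blast)
  have o2: "openin (compact_open_homeo T) ?S2" unfolding compact_open_homeo_def
    by (rule topology_generated_by_Basis) (use A B clopen_compact clopens_def clopen_compl in blast)
  have eq: "{g \<in> G. g ` A = B} = (?S1 \<inter> ?S2) \<inter> G"
  proof (intro equalityI subsetI)
    fix g assume "g \<in> {g \<in> G. g ` A = B}"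
    then have g: "g \<in> G" "g ` A = B" by auto
    have "g ` (topspace T - A) \<subseteq> topspace T - B"
    proof
      fix y assume "y \<in> g ` (topspace T - A)"
      then obtain x where x: "x \<in> topspace T" "x \<notin> A" "y = g x" by auto
      have "y \<in> topspace T" using x G_image_X[OF g(1)] by auto
      moreover have "y \<notin> B" using x g G_inj[OF g(1)] by (auto simp: inj_eq)
      ultimately show "y \<in> topspace T - B" by auto
    qed
    then show "g \<in> (?S1 \<inter> ?S2) \<inter> G" using g G_homeo by auto
  next
    fix g assume "g \<in> (?S1 \<inter> ?S2) \<inter> G"
    then have g: "g \<in> G" "g ` A \<subseteq> B" "g ` (topspace T - A) \<subseteq> topspace T - B" by auto
    have "B \<subseteq> g ` A"
    proof
      fix b assume b: "b \<in> B"
      then have "b \<in> topspace T" using clopen_sub[OF B] by auto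
      then obtain x where x: "x \<in> topspace T" "b = g x" using G_image_X[OF g(1)] by blast
      then have "x \<in> A" using g(3) b by blast
      then show "b \<in> g ` A" using x by auto
    qed
    then show "g \<in> {g \<in> G. g ` A = B}" using g by auto
  qed
  show ?thesis unfolding eq Gtop_def openin_subtopology using o1 o2 by blast
qed

lemma nb_self: "g \<in> G \<Longrightarrow> g \<in> nb g F"
  unfolding nb_def by auto

lemma nb_open: assumes "finite F" "F \<subseteq> clopens T" "g \<in> G"
  shows "openin (Gtop T G) (nb g F)"
proof -
  have "openin (Gtop T G) ((\<Inter>A\<in>F. {g' \<in> G. g' ` A = g ` A}) \<inter> topspace (Gtop T G))"
    using assms by (intro openin_INT O_open clopen_image) auto
  moreover have "(\<Inter>A\<in>F. {g' \<in> G. g' ` A = g ` A}) \<inter> topspace (Gtop T G) = nb g F"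
    unfolding nb_def by auto
  ultimately show ?thesis by simp
qed

lemma nb_mono: "F1 \<subseteq> F2 \<Longrightarrow> nb g F2 \<subseteq> nb g F1"
  unfolding nb_def by blast

lemma nb_sub: "nb g F \<subseteq> G"
  unfolding nb_def by blast

lemma Gtop_open_iff:
  "openin (Gtop T G) U \<longleftrightarrow> U \<subseteq> G \<and> (\<forall>g\<in>U. \<exists>F. finite F \<and> F \<subseteq> clopens T \<and> nb g F \<subseteq> U)"
proof
  assume R: "U \<subseteq> G \<and> (\<forall>g\<in>U. \<exists>F. finite F \<and> F \<subseteq> clopens T \<and> nb g F \<subseteq> U)"
  show "openin (Gtop T G) U"
  proof (subst openin_subopen, intro ballI)
    fix g assume "g \<in> U"
    then obtain F where F: "finite F" "F \<subseteq> clopens T" "nb g F \<subseteq> U" using R by meson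
    have gG: "g \<in> G" using R \<open>g \<in> U\<close> by blast
    show "\<exists>T'. openin (Gtop T G) T' \<and> g \<in> T' \<and> T' \<subseteq> U"
      using nb_open[OF F(1,2) gG] nb_self[OF gG] F(3) by blast
  qed
next
  assume "openin (Gtop T G) U"
  then obtain V where V: "openin (compact_open_homeo T) V" "U = V \<inter> G"
    unfolding Gtop_def openin_subtopology by blast
  let ?S = "{{g \<in> Homeo T. g ` K \<subseteq> U} | K U. compactin T K \<and> openin T U}"
  have gen: "generate_topology_on ?S V" using V(1) unfolding compact_open_homeo_def
    by (simp add: openin_topology_generated_by_iff)
  have "\<forall>g\<in>V \<inter> G. \<exists>F. finite F \<and> F \<subseteq> clopens T \<and> nb g F \<subseteq> V"
    using gen
  proof (induction rule: generate_topology_on.induct)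
    case Empty then show ?case by auto
  next
    case (Int a b)
    show ?case
    proof
      fix g assume g: "g \<in> a \<inter> b \<inter> G"
      have "g \<in> a \<inter> G" "g \<in> b \<inter> G" using g by auto
      then obtain F1 F2 where F1: "finite F1" "F1 \<subseteq> clopens T" "nb g F1 \<subseteq> a"
        and F2: "finite F2" "F2 \<subseteq> clopens T" "nb g F2 \<subseteq> b" using Int.IH by meson
      have "nb g (F1 \<union> F2) \<subseteq> a \<inter> b"
        using nb_mono[of F1 "F1 \<union> F2" g] nb_mono[of F2 "F1 \<union> F2" g] F1(3) F2(3) by blast
      moreover have "finite (F1 \<union> F2)" "F1 \<union> F2 \<subseteq> clopens T" using F1 F2 by auto
      ultimately show "\<exists>F. finite F \<and> F \<subseteq> clopens T \<and> nb g F \<subseteq> a \<inter> b" by blast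
    qed
  next
    case (UN K)
    show ?case
    proof
      fix g assume "g \<in> \<Union>K \<inter> G"
      then obtain k where k: "k \<in> K" "g \<in> k \<inter> G" by blast
      then obtain F where "finite F" "F \<subseteq> clopens T" "nb g F \<subseteq> k" using UN.IH by meson
      then show "\<exists>F. finite F \<and> F \<subseteq> clopens T \<and> nb g F \<subseteq> \<Union>K" using k(1) by blast
    qed
  next
    case (Basis s)
    then obtain K W where s: "s = {g \<in> Homeo T. g ` K \<subseteq> W}" "compactin T K" "openin T W" by blast
    show ?case
    proof
      fix g assume g: "g \<in> s \<inter> G"
      then have gG: "g \<in> G" and gK: "g ` K \<subseteq> W" using s by auto
      have cK: "compactin T (g ` K)"
        using image_compactin[OF s(2) homeomorphic_imp_continuous_map[OF G_hm[OF gG]]] .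
      have "\<exists>C\<in>clopens T. g ` K \<subseteq> C \<and> C \<subseteq> W" by (rule clopen_between[OF cK s(3) gK])
      then obtain C where C: "C \<in> clopens T" "g ` K \<subseteq> C" "C \<subseteq> W" by blast
      let ?A = "inv g ` C"
      have A: "?A \<in> clopens T" using clopen_inv_image[OF gG C(1)] .
      have KA: "K \<subseteq> ?A"
      proof
        fix x assume "x \<in> K"
        then have gx: "g x \<in> C" using C(2) by blast
        show "x \<in> ?A"
        proof (rule image_eqI[where x="g x"])
          show "x = inv g (g x)" using gG by simp
        qed (rule gx)
      qed
      have "nb g {?A} \<subseteq> s"
      proof
        fix g' assume "g' \<in> nb g {?A}"
        then have g': "g' \<in> G" "g' ` ?A = C" unfolding nb_def using gG by auto
        then have "g' ` K \<subseteq> W" using KA C by blast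
        then show "g' \<in> s" using s G_homeo g' by auto
      qed
      then show "\<exists>F. finite F \<and> F \<subseteq> clopens T \<and> nb g F \<subseteq> s" using A by blast
    qed
  qed
  then show "U \<subseteq> G \<and> (\<forall>g\<in>U. \<exists>F. finite F \<and> F \<subseteq> clopens T \<and> nb g F \<subseteq> U)"
    using V(2) nb_sub by (metis Int_subset_iff inf.cobounded2)
qed

end


lemma cont_generated:
  assumes a1: "\<forall>x\<in>topspace X. f x \<in> \<Union>S"
    and a2: "\<forall>s\<in>S. openin X {x \<in> topspace X. f x \<in> s}"
  shows "continuous_map X (topology_generated_by S) f"
proof -
  have "openin X {x \<in> topspace X. f x \<in> U}" if "generate_topology_on S U" for U
    using that
  proof (induction rule: generate_topology_on.induct)
    case Empty then show ?case by simp
  next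
    case (Int a b)
    have eq: "{x \<in> topspace X. f x \<in> a \<inter> b} = {x \<in> topspace X. f x \<in> a} \<inter> {x \<in> topspace X. f x \<in> b}"
      by blast
    show ?case unfolding eq by (rule openin_Int[OF Int.IH])
  next
    case (UN K)
    have "{x \<in> topspace X. f x \<in> \<Union>K} = \<Union>((\<lambda>k. {x \<in> topspace X. f x \<in> k}) ` K)" by blast
    moreover have "openin X (\<Union>((\<lambda>k. {x \<in> topspace X. f x \<in> k}) ` K))"
      by (rule openin_Union) (use UN.IH in blast)
    ultimately show ?case by simp
  next
    case (Basis s) then show ?case using a2 by blast
  qed
  then show ?thesis unfolding continuous_map_def
    using a1 by (simp add: openin_topology_generated_by_iff Pi_iff)
qed

lemma cont_discrete:
  assumes a1: "\<forall>x\<in>topspace X. f x \<in> S"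
    and a2: "\<forall>x\<in>topspace X. openin X {y \<in> topspace X. f y = f x}"
  shows "continuous_map X (discrete_topology S) f"
  unfolding continuous_map_def
proof (intro conjI allI impI)
  show "f \<in> topspace X \<rightarrow> topspace (discrete_topology S)" using a1 by auto
  fix U assume "openin (discrete_topology S) U"
  show "openin X {x \<in> topspace X. f x \<in> U}"
  proof (subst openin_subopen, intro ballI)
    fix x assume x: "x \<in> {x \<in> topspace X. f x \<in> U}"
    show "\<exists>T. openin X T \<and> x \<in> T \<and> T \<subseteq> {x \<in> topspace X. f x \<in> U}"
      by (rule exI[of _ "{y \<in> topspace X. f y = f x}"]) (use x a2 in auto)
  qed
qed

lemma embedding_crit:
  assumes c: "continuous_map X Y f" and inj: "inj_on f (topspace X)"
    and op: "\<And>U x. openin X U \<Longrightarrow> x \<in> U \<Longrightarrow>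
       \<exists>V. openin Y V \<and> f x \<in> V \<and> (\<forall>x'\<in>topspace X. f x' \<in> V \<longrightarrow> x' \<in> U)"
  shows "embedding_map X Y f"
proof -
  let ?Y = "subtopology Y (f ` topspace X)"
  have c': "continuous_map X ?Y f" using c unfolding continuous_map_in_subtopology by auto
  have ts: "f ` topspace X = topspace ?Y"
    using continuous_map_image_subset_topspace[OF c] by auto
  have om: "open_map X ?Y f" unfolding open_map_def
  proof (intro allI impI)
    fix U assume U: "openin X U"
    show "openin ?Y (f ` U)"
    proof (subst openin_subopen, intro ballI)
      fix y assume "y \<in> f ` U"
      then obtain x where x: "x \<in> U" "y = f x" by blast
      obtain V where V: "openin Y V" "f x \<in> V" "\<forall>x'\<in>topspace X. f x' \<in> V \<longrightarrow> x' \<in> U"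
        using op[OF U x(1)] by blast
      have "openin ?Y (V \<inter> f ` topspace X)" using V(1) openin_subtopology by blast
      moreover have "y \<in> V \<inter> f ` topspace X" using x V(2) openin_subset[OF U] by blast
      moreover have "V \<inter> f ` topspace X \<subseteq> f ` U" using V(3) by blast
      ultimately show "\<exists>T. openin ?Y T \<and> y \<in> T \<and> T \<subseteq> f ` U" by blast
    qed
  qed
  show ?thesis unfolding embedding_map_def
    by (rule bijective_open_imp_homeomorphic_map[OF c' om ts inj])
qed

lemma hm_bij:
  assumes hm: "homeomorphic_map Y Y f" and out: "\<And>y. y \<notin> topspace Y \<Longrightarrow> f y = y"
  shows "bij f"
proof -
  have inj: "inj_on f (topspace Y)" using hm homeomorphic_imp_injective_map by blast
  have im: "f ` topspace Y = topspace Y" using hm homeomorphic_imp_surjective_map by blast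
  have mem: "f z \<in> topspace Y \<longleftrightarrow> z \<in> topspace Y" for z
  proof (cases "z \<in> topspace Y")
    case True then show ?thesis using im by blast
  next
    case False then show ?thesis using out[OF False] by simp
  qed
  have "inj f"
  proof (rule injI)
    fix x y assume e: "f x = f y"
    show "x = y"
    proof (cases "x \<in> topspace Y")
      case True
      then have "y \<in> topspace Y" using mem[of x] mem[of y] e by simp
      then show ?thesis using inj e True by (meson inj_onD)
    next
      case False
      then have "y \<notin> topspace Y" using mem[of x] mem[of y] e by simp
      then show ?thesis using e False out by metis
    qed
  qed
  moreover have "surj f"
  proof -
    { fix y have "y \<in> range f"
      proof (cases "y \<in> topspace Y")
        case True then show ?thesis using im by blast
      next
        case False then show ?thesis using out[OF False] by (metis rangeI)
      qed }
    then show ?thesis by blast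
  qed
  ultimately show ?thesis by (simp add: bij_def)
qed

lemma aut_hm: "f \<in> Aut Y mul \<Longrightarrow> homeomorphic_map Y Y f"
  unfolding Aut_def by blast
lemma aut_out: "f \<in> Aut Y mul \<Longrightarrow> y \<notin> topspace Y \<Longrightarrow> f y = y"
  unfolding Aut_def by blast
lemma aut_mul: "f \<in> Aut Y mul \<Longrightarrow> x \<in> topspace Y \<Longrightarrow> y \<in> topspace Y \<Longrightarrow> f (mul x y) = mul (f x) (f y)"
  unfolding Aut_def by blast
lemma aut_bij: assumes "f \<in> Aut Y mul" shows "bij f"
  by (rule hm_bij[OF aut_hm[OF assms]]) (rule aut_out[OF assms])
lemma aut_inv_f [simp]: "f \<in> Aut Y mul \<Longrightarrow> inv f (f x) = x"
  using aut_bij bij_is_inj inv_f_f by metis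
lemma aut_f_inv [simp]: "f \<in> Aut Y mul \<Longrightarrow> f (inv f x) = x"
  using aut_bij bij_is_surj surj_f_inv_f by metis
lemma aut_top: "f \<in> Aut Y mul \<Longrightarrow> y \<in> topspace Y \<Longrightarrow> f y \<in> topspace Y"
  using aut_hm homeomorphic_imp_surjective_map by blast
lemma aut_inv_top: assumes "f \<in> Aut Y mul" "y \<in> topspace Y" shows "inv f y \<in> topspace Y"
proof -
  obtain x where "x \<in> topspace Y" "y = f x"
    using assms homeomorphic_imp_surjective_map[OF aut_hm[OF assms(1)]] by blast
  then show ?thesis using assms(1) by simp
qed
lemma aut_id: "id \<in> Aut Y mul"
  unfolding Aut_def by simp
lemma aut_comp: assumes f: "f \<in> Aut Y mul" and h: "h \<in> Aut Y mul" shows "f \<circ> h \<in> Aut Y mul"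
  unfolding Aut_def
proof (intro CollectI conjI ballI allI impI)
  show "homeomorphic_map Y Y (f \<circ> h)"
    using homeomorphic_map_compose[OF aut_hm[OF h] aut_hm[OF f]] .
  fix x y assume "x \<in> topspace Y" "y \<in> topspace Y"
  then show "(f \<circ> h) (mul x y) = mul ((f \<circ> h) x) ((f \<circ> h) y)"
    using aut_mul[OF h] aut_mul[OF f] aut_top[OF h] by simp
next
  fix y assume "y \<notin> topspace Y"
  then show "(f \<circ> h) y = y" using aut_out[OF h] aut_out[OF f] by simp
qed
lemma aut_inv: assumes f: "f \<in> Aut Y mul" shows "inv f \<in> Aut Y mul"
  unfolding Aut_def
proof (intro CollectI conjI ballI allI impI)
  obtain g where g: "homeomorphic_maps Y Y f g" using aut_hm[OF f] homeomorphic_map_maps by blast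
  then have hg: "homeomorphic_map Y Y g" and fg: "\<forall>y\<in>topspace Y. f (g y) = y"
    unfolding homeomorphic_maps_map by blast+
  have "inv f y = g y" if "y \<in> topspace Y" for y
    using inv_f_eq[OF bij_is_inj[OF aut_bij[OF f]]] fg that by blast
  then show "homeomorphic_map Y Y (inv f)" using homeomorphic_map_eq[OF hg] by metis
  fix x y assume x: "x \<in> topspace Y" and y: "y \<in> topspace Y"
  have "f (mul (inv f x) (inv f y)) = mul x y"
    using aut_mul[OF f aut_inv_top[OF f x] aut_inv_top[OF f y]] f by simp
  then show "inv f (mul x y) = mul (inv f x) (inv f y)"
    using inv_f_eq[OF bij_is_inj[OF aut_bij[OF f]]] by metis
next
  fix y assume "y \<notin> topspace Y"
  then show "inv f y = y" using aut_out[OF f] inv_f_eq[OF bij_is_inj[OF aut_bij[OF f]]] by metis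
qed

lemma aut_inv_comp: assumes "f \<in> Aut Y mul" shows "f \<circ> inv f = id" "inv f \<circ> f = id"
  using assms by (auto simp: fun_eq_iff)

lemma topspace_birkhoff:
  assumes e: "e \<in> topspace Y"
  shows "topspace (birkhoff_top Y mul e) = Aut Y mul"
proof -
  let ?S = "{(\<lambda>f. h \<circ> f) ` birkhoff_nbhd Y mul K W | h K W.
        h \<in> Aut Y mul \<and> compactin Y K \<and> openin Y W \<and> e \<in> W}"
  have "\<Union>?S \<subseteq> Aut Y mul"
  proof
    fix k assume "k \<in> \<Union>?S"
    then obtain s where "s \<in> ?S" "k \<in> s" by (rule UnionE)
    then obtain h K W where "h \<in> Aut Y mul" "s = (\<lambda>f. h \<circ> f) ` birkhoff_nbhd Y mul K W" by blast
    then obtain f where "h \<in> Aut Y mul" "f \<in> birkhoff_nbhd Y mul K W" "k = h \<circ> f" using \<open>k \<in> s\<close> by blast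
    then show "k \<in> Aut Y mul" using aut_comp unfolding birkhoff_nbhd_def by blast
  qed
  moreover have "Aut Y mul \<subseteq> \<Union>?S"
  proof
    fix k assume k: "k \<in> Aut Y mul"
    have "(\<lambda>f. id \<circ> f) ` birkhoff_nbhd Y mul {} (topspace Y) \<in> ?S"
      by (rule CollectI, intro exI conjI) (use aut_id e in auto)
    moreover have "k \<in> (\<lambda>f. id \<circ> f) ` birkhoff_nbhd Y mul {} (topspace Y)"
      using k unfolding birkhoff_nbhd_def by auto
    ultimately show "k \<in> \<Union>?S" by blast
  qed
  ultimately show ?thesis unfolding birkhoff_top_def by simp
qed

lemma birkhoff_basis_open:
  "h \<in> Aut Y mul \<Longrightarrow> compactin Y K \<Longrightarrow> openin Y W \<Longrightarrow> e \<in> W \<Longrightarrow>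
   openin (birkhoff_top Y mul e) ((\<lambda>f. h \<circ> f) ` birkhoff_nbhd Y mul K W)"
  unfolding birkhoff_top_def by (rule topology_generated_by_Basis, rule CollectI, intro exI conjI) auto

lemma cont_birkhoff:
  assumes e: "e \<in> topspace Y" and a1: "\<forall>x\<in>topspace X. F x \<in> Aut Y mul"
    and a2: "\<And>h K W. h \<in> Aut Y mul \<Longrightarrow> compactin Y K \<Longrightarrow> openin Y W \<Longrightarrow> e \<in> W \<Longrightarrow>
        openin X {x \<in> topspace X. F x \<in> (\<lambda>k. h \<circ> k) ` birkhoff_nbhd Y mul K W}"
  shows "continuous_map X (birkhoff_top Y mul e) F"
proof -
  let ?S = "{(\<lambda>f. h \<circ> f) ` birkhoff_nbhd Y mul K W | h K W.
        h \<in> Aut Y mul \<and> compactin Y K \<and> openin Y W \<and> e \<in> W}"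
  have "\<Union>?S = Aut Y mul" using topspace_birkhoff[OF e, of mul] unfolding birkhoff_top_def by simp
  then have "\<forall>x\<in>topspace X. F x \<in> \<Union>?S" using a1 by simp
  moreover have "\<forall>s\<in>?S. openin X {x \<in> topspace X. F x \<in> s}" using a2 by blast
  ultimately show ?thesis unfolding birkhoff_top_def by (rule cont_generated)
qed

lemma comp_image_iff:
  assumes "bij h" shows "k \<in> (\<lambda>f. h \<circ> f) ` N \<longleftrightarrow> inv h \<circ> k \<in> N"
proof
  assume "k \<in> (\<lambda>f. h \<circ> f) ` N"
  then obtain f where "f \<in> N" "k = h \<circ> f" by blast
  moreover have "inv h \<circ> (h \<circ> f) = f" using assms by (simp add: fun_eq_iff bij_is_inj)
  ultimately show "inv h \<circ> k \<in> N" by simp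
next
  assume "inv h \<circ> k \<in> N"
  moreover have "k = h \<circ> (inv h \<circ> k)" using assms
    by (simp add: fun_eq_iff bij_is_surj surj_f_inv_f)
  ultimately show "k \<in> (\<lambda>f. h \<circ> f) ` N" by blast
qed

lemma inv_bij_eq: "bij p \<Longrightarrow> p x = y \<Longrightarrow> inv p y = x"
  using inv_f_eq bij_is_inj by metis


context stoneG begin

lemma alpha_eq: "A \<in> clopens T \<Longrightarrow> act_alpha T g A = g ` A"
  by (simp add: act_alpha_def)
lemma alpha_out: "A \<notin> clopens T \<Longrightarrow> act_alpha T g A = A"
  by (simp add: act_alpha_def)
lemma alpha_clopen: "g \<in> G \<Longrightarrow> A \<in> clopens T \<Longrightarrow> act_alpha T g A \<in> clopens T"
  using alpha_eq clopen_image by simp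
lemma alpha_id: "act_alpha T id = id"
  by (simp add: fun_eq_iff act_alpha_def)
lemma alpha_comp: assumes g: "g \<in> G" and h: "h \<in> G"
  shows "act_alpha T (g \<circ> h) = act_alpha T g \<circ> act_alpha T h"
proof (rule ext)
  fix A
  show "act_alpha T (g \<circ> h) A = (act_alpha T g \<circ> act_alpha T h) A"
  proof (cases "A \<in> clopens T")
    case True
    then have "h ` A \<in> clopens T" by (rule clopen_image[OF h])
    then show ?thesis using True by (simp add: act_alpha_def image_comp)
  next
    case False then show ?thesis by (simp add: act_alpha_def)
  qed
qed
lemma G_invl: assumes g: "g \<in> G" shows "inv g \<circ> g = id"
  by (rule inv_o_cancel[OF G_inj[OF g]])
lemma G_invr: assumes g: "g \<in> G" shows "g \<circ> inv g = id"
  by (rule surj_iff[THEN iffD1, OF bij_is_surj[OF G_bij[OF g]]])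
lemma alpha_invl: assumes g: "g \<in> G" shows "act_alpha T (inv g) \<circ> act_alpha T g = id"
proof -
  have "act_alpha T (inv g) \<circ> act_alpha T g = act_alpha T (inv g \<circ> g)"
    by (rule alpha_comp[OF G_inv[OF g] g, symmetric])
  also have "\<dots> = id" using G_invl[OF g] alpha_id by simp
  finally show ?thesis .
qed
lemma alpha_invr: assumes g: "g \<in> G" shows "act_alpha T g \<circ> act_alpha T (inv g) = id"
proof -
  have "act_alpha T g \<circ> act_alpha T (inv g) = act_alpha T (g \<circ> inv g)"
    by (rule alpha_comp[OF g G_inv[OF g], symmetric])
  also have "\<dots> = id" using G_invr[OF g] alpha_id by simp
  finally show ?thesis .
qed
lemma alpha_invl' [simp]: "g \<in> G \<Longrightarrow> act_alpha T (inv g) (act_alpha T g A) = A"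
  using fun_cong[OF alpha_invl, of g A] by simp
lemma alpha_invr' [simp]: "g \<in> G \<Longrightarrow> act_alpha T g (act_alpha T (inv g) A) = A"
  using fun_cong[OF alpha_invr, of g A] by simp
lemma alpha_inv_eq: "g \<in> G \<Longrightarrow> inv (act_alpha T g) = act_alpha T (inv g)"
  by (rule inv_unique_comp[OF alpha_invr alpha_invl])

lemma alpha_symdiff: assumes g: "g \<in> G" and A: "A \<in> clopens T" and B: "B \<in> clopens T"
  shows "act_alpha T g (symdiff A B) = symdiff (act_alpha T g A) (act_alpha T g B)"
proof -
  have "symdiff A B \<in> clopens T" using A B by (rule clopen_symdiff)
  then show ?thesis using A B G_inj[OF g]
    by (simp add: alpha_eq symdiff_def image_Un image_set_diff)
qed

lemma alpha_Aut: assumes g: "g \<in> G" shows "act_alpha T g \<in> Aut (Vtop T) symdiff"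
  unfolding Aut_def
proof (intro CollectI conjI ballI allI impI)
  have "homeomorphic_maps (Vtop T) (Vtop T) (act_alpha T g) (act_alpha T (inv g))"
    unfolding homeomorphic_maps_def Vtop_def
    using g G_inv alpha_clopen by (auto simp: Pi_iff)
  then show "homeomorphic_map (Vtop T) (Vtop T) (act_alpha T g)"
    using homeomorphic_map_maps by blast
next
  fix x y assume "x \<in> topspace (Vtop T)" "y \<in> topspace (Vtop T)"
  then show "act_alpha T g (symdiff x y) = symdiff (act_alpha T g x) (act_alpha T g y)"
    using alpha_symdiff[OF g] unfolding Vtop_def by simp
next
  fix y assume "y \<notin> topspace (Vtop T)"
  then show "act_alpha T g y = y" unfolding Vtop_def by (simp add: alpha_out)
qed

lemma G_eqI: assumes g: "g \<in> G" and h: "h \<in> G"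
  and eq: "\<And>A. A \<in> clopens T \<Longrightarrow> g ` A = h ` A" shows "g = h"
proof (rule ext)
  fix x
  show "g x = h x"
  proof (cases "x \<in> topspace T")
    case True
    show ?thesis
    proof (rule ccontr)
      assume ne: "g x \<noteq> h x"
      have "g x \<in> topspace T" "h x \<in> topspace T" using True G_memX g h by auto
      then obtain C where C: "C \<in> clopens T" "g x \<in> C" "h x \<notin> C" using sep ne by blast
      let ?A = "inv g ` C"
      have A: "?A \<in> clopens T" by (rule clopen_inv_image[OF g C(1)])
      have xA: "x \<in> ?A"
      proof (rule image_eqI[where x="g x"])
        show "x = inv g (g x)" using g by simp
      qed (rule C(2))
      have "g ` ?A = C" using g by simp
      then have "h ` ?A = C" using eq[OF A] by simp
      then have "h x \<in> C" using xA by blast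
      then show False using C(3) by blast
    qed
  next
    case False then show ?thesis using G_out[OF g False] G_out[OF h False] by simp
  qed
qed

lemma alpha_inj: "inj_on (act_alpha T) G"
proof (rule inj_onI)
  fix g h assume g: "g \<in> G" and h: "h \<in> G" and e: "act_alpha T g = act_alpha T h"
  show "g = h"
  proof (rule G_eqI[OF g h])
    fix A assume "A \<in> clopens T"
    moreover have "act_alpha T g A = act_alpha T h A" using e by simp
    ultimately show "g ` A = h ` A" using alpha_eq by simp
  qed
qed

lemma topspace_Vtop [simp]: "topspace (Vtop T) = clopens T"
  unfolding Vtop_def by simp

lemma alpha_cont:
  "continuous_map (prod_topology (Gtop T G) (Vtop T)) (Vtop T) (\<lambda>(g, A). act_alpha T g A)"
  unfolding Vtop_def
proof (rule cont_discrete)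
  show "\<forall>x\<in>topspace (prod_topology (Gtop T G) (discrete_topology (clopens T))).
          (case x of (g, A) \<Rightarrow> act_alpha T g A) \<in> clopens T"
    using alpha_clopen by auto
  show "\<forall>x\<in>topspace (prod_topology (Gtop T G) (discrete_topology (clopens T))).
          openin (prod_topology (Gtop T G) (discrete_topology (clopens T)))
            {y \<in> topspace (prod_topology (Gtop T G) (discrete_topology (clopens T))).
               (case y of (g, A) \<Rightarrow> act_alpha T g A) = (case x of (g, A) \<Rightarrow> act_alpha T g A)}"
  proof
    fix x assume "x \<in> topspace (prod_topology (Gtop T G) (discrete_topology (clopens T)))"
    let ?B = "case x of (g, A) \<Rightarrow> act_alpha T g A"
    let ?P = "{y \<in> topspace (prod_topology (Gtop T G) (discrete_topology (clopens T))).
               (case y of (g, A) \<Rightarrow> act_alpha T g A) = ?B}"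
    show "openin (prod_topology (Gtop T G) (discrete_topology (clopens T))) ?P"
      unfolding openin_prod_topology_alt
    proof (intro allI impI)
      fix g A assume gA: "(g, A) \<in> ?P"
      then have g: "g \<in> G" and A: "A \<in> clopens T" and e: "act_alpha T g A = ?B" by auto
      have "nb g {A} \<times> {A} \<subseteq> ?P"
      proof
        fix q assume "q \<in> nb g {A} \<times> {A}"
        then obtain g' where q: "q = (g', A)" "g' \<in> G" "g' ` A = g ` A" unfolding nb_def by blast
        then have "act_alpha T g' A = act_alpha T g A" using A alpha_eq by simp
        then show "q \<in> ?P" using q A e by simp
      qed
      moreover have "openin (Gtop T G) (nb g {A})" using nb_open A g by simp
      moreover have "openin (discrete_topology (clopens T)) {A}" using A by simp
      moreover have "g \<in> nb g {A}" using nb_self[OF g] .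
      ultimately show "\<exists>U V. openin (Gtop T G) U \<and> openin (discrete_topology (clopens T)) V \<and>
                  g \<in> U \<and> A \<in> V \<and> U \<times> V \<subseteq> ?P" by blast
    qed
  qed
qed

end


context stoneG begin

lemma nbV_id: "id \<in> birkhoff_nbhd (Vtop T) symdiff F {{}}"
  unfolding birkhoff_nbhd_def using aut_id by (simp add: symdiff_def)

lemma ia_cont: "continuous_map (Gtop T G) (birkhoff_top (Vtop T) symdiff {}) (act_alpha T)"
proof (rule cont_birkhoff)
  show "{} \<in> topspace (Vtop T)" by simp
  show "\<forall>x\<in>topspace (Gtop T G). act_alpha T x \<in> Aut (Vtop T) symdiff" using alpha_Aut by simp
next
  fix h K W assume h: "h \<in> Aut (Vtop T) symdiff" and K: "compactin (Vtop T) K"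
    and W: "openin (Vtop T) W" and e: "{} \<in> W"
  let ?N = "birkhoff_nbhd (Vtop T) symdiff K W"
  let ?P = "{x \<in> topspace (Gtop T G). act_alpha T x \<in> (\<lambda>k. h \<circ> k) ` ?N}"
  have Kc: "finite K" "K \<subseteq> clopens T" using K unfolding Vtop_def compactin_discrete_topology by auto
  have hb: "bij h" by (rule aut_bij[OF h])
  show "openin (Gtop T G) ?P"
    unfolding Gtop_open_iff
  proof (intro conjI ballI)
    show "?P \<subseteq> G" by simp
    fix g assume gP: "g \<in> ?P"
    then have g: "g \<in> G" by simp
    let ?f = "inv h \<circ> act_alpha T g"
    have "act_alpha T g \<in> (\<lambda>k. h \<circ> k) ` ?N" using gP by simp
    then have fN: "?f \<in> ?N" by (rule comp_image_iff[OF hb, THEN iffD1])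
    let ?F = "K \<union> (\<lambda>y. act_alpha T (inv g) (h y)) ` K"
    have Ffin: "finite ?F" using Kc by simp
    have hy: "h y \<in> clopens T" if "y \<in> K" for y
      using aut_top[OF h, of y] that Kc by auto
    have Fcl: "?F \<subseteq> clopens T" using Kc hy alpha_clopen[OF G_inv[OF g]] by auto
    have "nb g ?F \<subseteq> ?P"
    proof
      fix g' assume g'F: "g' \<in> nb g ?F"
      then have g': "g' \<in> G" and eqF: "\<And>A. A \<in> ?F \<Longrightarrow> g' ` A = g ` A" unfolding nb_def by auto
      have eqa: "act_alpha T g' A = act_alpha T g A" if "A \<in> ?F" for A
        using eqF[OF that] Fcl that alpha_eq by auto
      let ?f' = "inv h \<circ> act_alpha T g'"
      have f'A: "?f' \<in> Aut (Vtop T) symdiff" by (rule aut_comp[OF aut_inv[OF h] alpha_Aut[OF g']])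
      have fA: "?f \<in> Aut (Vtop T) symdiff" using fN unfolding birkhoff_nbhd_def by blast
      have "?f' \<in> ?N" unfolding birkhoff_nbhd_def
      proof (intro CollectI conjI ballI f'A)
        fix y assume y: "y \<in> K"
        have e1: "?f' y = ?f y" using eqa[of y] y by simp
        let ?z = "act_alpha T (inv g) (h y)"
        have z1: "act_alpha T g ?z = h y" using g by simp
        have z2: "act_alpha T g' ?z = h y" using eqa[of ?z] y z1 by simp
        have "?f' ?z = y" using z2 h by simp
        then have i1: "inv ?f' y = ?z" by (rule inv_bij_eq[OF aut_bij[OF f'A]])
        have "?f ?z = y" using z1 h by simp
        then have i2: "inv ?f y = ?z" by (rule inv_bij_eq[OF aut_bij[OF fA]])
        have "?f y \<in> (\<lambda>u. symdiff u y) ` W \<and> inv ?f y \<in> (\<lambda>u. symdiff u y) ` W"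
          using fN y unfolding birkhoff_nbhd_def by blast
        then show "?f' y \<in> (\<lambda>u. symdiff u y) ` W" "inv ?f' y \<in> (\<lambda>u. symdiff u y) ` W"
          using e1 i1 i2 by simp_all
      qed
      then have "act_alpha T g' \<in> (\<lambda>k. h \<circ> k) ` ?N" by (rule comp_image_iff[OF hb, THEN iffD2])
      then show "g' \<in> ?P" using g' by simp
    qed
    then show "\<exists>F. finite F \<and> F \<subseteq> clopens T \<and> nb g F \<subseteq> ?P" using Ffin Fcl by blast
  qed
qed

lemma ia_emb: "embedding_map (Gtop T G) (birkhoff_top (Vtop T) symdiff {}) (act_alpha T)"
proof (rule embedding_crit[OF ia_cont])
  show "inj_on (act_alpha T) (topspace (Gtop T G))" using alpha_inj by simp
next
  fix U g assume U: "openin (Gtop T G) U" and gU: "g \<in> U"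
  then have g: "g \<in> G" using openin_subset by fastforce
  obtain F where F: "finite F" "F \<subseteq> clopens T" "nb g F \<subseteq> U"
    using U gU unfolding Gtop_open_iff by meson
  let ?N = "birkhoff_nbhd (Vtop T) symdiff F {{}}"
  let ?V = "(\<lambda>k. act_alpha T g \<circ> k) ` ?N"
  have oV: "openin (birkhoff_top (Vtop T) symdiff {}) ?V"
    by (rule birkhoff_basis_open[OF alpha_Aut[OF g]]) (use F in \<open>auto simp: Vtop_def compactin_discrete_topology\<close>)
  have hb: "bij (act_alpha T g)" by (rule aut_bij[OF alpha_Aut[OF g]])
  have "inv (act_alpha T g) \<circ> act_alpha T g = id" by (rule inv_o_cancel[OF bij_is_inj[OF hb]])
  then have "inv (act_alpha T g) \<circ> act_alpha T g \<in> ?N" using nbV_id by simp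
  then have gV: "act_alpha T g \<in> ?V" by (rule comp_image_iff[OF hb, THEN iffD2])
  have "\<forall>g'\<in>topspace (Gtop T G). act_alpha T g' \<in> ?V \<longrightarrow> g' \<in> U"
  proof (intro ballI impI)
    fix g' assume g': "g' \<in> topspace (Gtop T G)" and V: "act_alpha T g' \<in> ?V"
    then have g'G: "g' \<in> G" by simp
    have fN: "inv (act_alpha T g) \<circ> act_alpha T g' \<in> ?N" using V by (rule comp_image_iff[OF hb, THEN iffD1])
    have "g' ` A = g ` A" if A: "A \<in> F" for A
    proof -
      have "(inv (act_alpha T g) \<circ> act_alpha T g') A \<in> (\<lambda>u. symdiff u A) ` {{}}"
        using fN A unfolding birkhoff_nbhd_def by blast
      then have "inv (act_alpha T g) (act_alpha T g' A) = A" by (simp add: symdiff_def)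
      then have "act_alpha T g' A = act_alpha T g A"
        using bij_inv_eq_iff[OF hb] by metis
      moreover have "A \<in> clopens T" using A F(2) by blast
      ultimately show ?thesis using alpha_eq by simp
    qed
    then have "g' \<in> nb g F" unfolding nb_def using g'G by blast
    then show "g' \<in> U" using F(3) by blast
  qed
  then show "\<exists>V. openin (birkhoff_top (Vtop T) symdiff {}) V \<and> act_alpha T g \<in> V \<and>
     (\<forall>x'\<in>topspace (Gtop T G). act_alpha T x' \<in> V \<longrightarrow> x' \<in> U)" using oV gV by blast
qed

end


context stoneG begin

lemma dualV_sd: "f \<in> dualV T \<Longrightarrow> A \<in> clopens T \<Longrightarrow> B \<in> clopens T \<Longrightarrow> f (symdiff A B) = (f A \<noteq> f B)"
  unfolding dualV_def by blast
lemma dualV_out: "f \<in> dualV T \<Longrightarrow> A \<notin> clopens T \<Longrightarrow> f A = False"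
  unfolding dualV_def by blast
lemma dualV_I: "(\<And>A B. A \<in> clopens T \<Longrightarrow> B \<in> clopens T \<Longrightarrow> f (symdiff A B) = (f A \<noteq> f B)) \<Longrightarrow>
   (\<And>A. A \<notin> clopens T \<Longrightarrow> f A = False) \<Longrightarrow> f \<in> dualV T"
  unfolding dualV_def by blast
lemma Z_dualV: "(\<lambda>A. False) \<in> dualV T"
  by (rule dualV_I) auto
lemma dual_add_dualV: assumes "f \<in> dualV T" "h \<in> dualV T" shows "dual_add f h \<in> dualV T"
proof (rule dualV_I)
  fix A B assume "A \<in> clopens T" "B \<in> clopens T"
  then show "dual_add f h (symdiff A B) = (dual_add f h A \<noteq> dual_add f h B)"
    using dualV_sd[OF assms(1)] dualV_sd[OF assms(2)] unfolding dual_add_def by auto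
next
  fix A assume "A \<notin> clopens T"
  then show "dual_add f h A = False" using dualV_out assms unfolding dual_add_def by auto
qed

lemma topspace_dualV_top [simp]: "topspace (dualV_top T) = dualV T"
proof -
  have "dualV T = {f \<in> dualV T. f {} = False}"
    using dualV_sd[of _ "{}" "{}"] by (auto simp: symdiff_def)
  then have "dualV T \<in> {{f \<in> dualV T. f A = b} | A b. A \<in> clopens T}"
    by (intro CollectI exI[of _ "{}"] exI[of _ False]) simp
  then show ?thesis unfolding dualV_top_def by auto
qed

lemma dV_basis_open: "A \<in> clopens T \<Longrightarrow> openin (dualV_top T) {f \<in> dualV T. f A = b}"
  unfolding dualV_top_def by (rule topology_generated_by_Basis) blast

lemma cont_into_dV:
  assumes a1: "\<forall>x\<in>topspace X. f x \<in> dualV T"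
    and a2: "\<And>A b. A \<in> clopens T \<Longrightarrow> openin X {x \<in> topspace X. f x A = b}"
  shows "continuous_map X (dualV_top T) f"
proof -
  let ?S = "{{f \<in> dualV T. f A = b} | A b. A \<in> clopens T}"
  have U: "\<Union>?S = dualV T" using topspace_dualV_top unfolding dualV_top_def by simp
  have "continuous_map X (topology_generated_by ?S) f"
  proof (rule cont_generated)
    show "\<forall>x\<in>topspace X. f x \<in> \<Union>?S" using a1 U by simp
    show "\<forall>s\<in>?S. openin X {x \<in> topspace X. f x \<in> s}"
    proof
      fix s assume "s \<in> ?S"
      then obtain A b where s: "s = {f \<in> dualV T. f A = b}" "A \<in> clopens T" by blast
      have "{x \<in> topspace X. f x \<in> s} = {x \<in> topspace X. f x A = b}" using s a1 by auto
      then show "openin X {x \<in> topspace X. f x \<in> s}" using a2[OF s(2)] by simp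
    qed
  qed
  then show ?thesis unfolding dualV_top_def .
qed

definition box :: "('a set \<Rightarrow> bool) \<Rightarrow> 'a set set \<Rightarrow> ('a set \<Rightarrow> bool) set" where
  "box u F = {u' \<in> dualV T. \<forall>A\<in>F. u' A = u A}"

lemma box_self: "u \<in> dualV T \<Longrightarrow> u \<in> box u F"
  unfolding box_def by simp
lemma box_mono: "F1 \<subseteq> F2 \<Longrightarrow> box u F2 \<subseteq> box u F1"
  unfolding box_def by blast
lemma box_open: assumes "finite F" "F \<subseteq> clopens T" shows "openin (dualV_top T) (box u F)"
proof -
  have "openin (dualV_top T) ((\<Inter>A\<in>F. {f \<in> dualV T. f A = u A}) \<inter> topspace (dualV_top T))"
    using assms by (intro openin_INT dV_basis_open) auto
  moreover have "(\<Inter>A\<in>F. {f \<in> dualV T. f A = u A}) \<inter> topspace (dualV_top T) = box u F"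
    unfolding box_def by auto
  ultimately show ?thesis by simp
qed

lemma dV_open_box:
  assumes W: "openin (dualV_top T) W" and u: "u \<in> W"
  shows "\<exists>F. finite F \<and> F \<subseteq> clopens T \<and> box u F \<subseteq> W"
proof -
  let ?S = "{{f \<in> dualV T. f A = b} | A b. A \<in> clopens T}"
  have gen: "generate_topology_on ?S W" using W unfolding dualV_top_def
    by (simp add: openin_topology_generated_by_iff)
  have "\<forall>u\<in>W. \<exists>F. finite F \<and> F \<subseteq> clopens T \<and> box u F \<subseteq> W"
    using gen
  proof (induction rule: generate_topology_on.induct)
    case Empty then show ?case by simp
  next
    case (Int a b)
    show ?case
    proof
      fix u assume u: "u \<in> a \<inter> b"
      have "u \<in> a" "u \<in> b" using u by auto
      then obtain F1 F2 where F1: "finite F1" "F1 \<subseteq> clopens T" "box u F1 \<subseteq> a"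
        and F2: "finite F2" "F2 \<subseteq> clopens T" "box u F2 \<subseteq> b" using Int.IH by meson
      have "box u (F1 \<union> F2) \<subseteq> a \<inter> b"
        using box_mono[of F1 "F1 \<union> F2" u] box_mono[of F2 "F1 \<union> F2" u] F1(3) F2(3) by blast
      moreover have "finite (F1 \<union> F2)" "F1 \<union> F2 \<subseteq> clopens T" using F1 F2 by auto
      ultimately show "\<exists>F. finite F \<and> F \<subseteq> clopens T \<and> box u F \<subseteq> a \<inter> b" by blast
    qed
  next
    case (UN K)
    show ?case
    proof
      fix u assume "u \<in> \<Union>K"
      then obtain k where k: "k \<in> K" "u \<in> k" by blast
      then obtain F where "finite F" "F \<subseteq> clopens T" "box u F \<subseteq> k" using UN.IH by meson
      then show "\<exists>F. finite F \<and> F \<subseteq> clopens T \<and> box u F \<subseteq> \<Union>K" using k(1) by blast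
    qed
  next
    case (Basis s)
    then obtain A b where s: "s = {f \<in> dualV T. f A = b}" "A \<in> clopens T" by blast
    show ?case
    proof
      fix u assume "u \<in> s"
      then have "box u {A} \<subseteq> s" using s unfolding box_def by auto
      then show "\<exists>F. finite F \<and> F \<subseteq> clopens T \<and> box u F \<subseteq> s" using s(2) by blast
    qed
  qed
  then show ?thesis using u by blast
qed

lemma delta_dualV: "delta T x \<in> dualV T"
proof (rule dualV_I)
  fix A B assume "A \<in> clopens T" "B \<in> clopens T"
  moreover then have "symdiff A B \<in> clopens T" by (rule clopen_symdiff)
  ultimately show "delta T x (symdiff A B) = (delta T x A \<noteq> delta T x B)"
    unfolding delta_def symdiff_def by auto
qed (simp add: delta_def)

lemma delta_cont: "continuous_map T (dualV_top T) (delta T)"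
proof (rule cont_into_dV)
  show "\<forall>x\<in>topspace T. delta T x \<in> dualV T" using delta_dualV by simp
  fix A b assume A: "A \<in> clopens T"
  have "{x \<in> topspace T. delta T x A = b} = (if b then A else topspace T - A)"
    using A clopen_sub[OF A] unfolding delta_def by auto
  then show "openin T {x \<in> topspace T. delta T x A = b}"
    using A clopen_compl[OF A] unfolding clopens_def by simp
qed

lemma delta_inj: "inj_on (delta T) (topspace T)"
proof (rule inj_onI)
  fix x y assume x: "x \<in> topspace T" and y: "y \<in> topspace T" and e: "delta T x = delta T y"
  show "x = y"
  proof (rule ccontr)
    assume "x \<noteq> y"
    then obtain C where C: "C \<in> clopens T" "x \<in> C" "y \<notin> C" using sep x y by blast
    have "delta T x C = delta T y C" using e by simp
    then show False using C unfolding delta_def by simp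
  qed
qed

lemma delta_emb: "embedding_map T (dualV_top T) (delta T)"
proof (rule embedding_crit[OF delta_cont delta_inj])
  fix U x assume U: "openin T U" and x: "x \<in> U"
  obtain C where C: "C \<in> clopens T" "x \<in> C" "C \<subseteq> U" using clopen_base[OF U x] by blast
  let ?V = "{f \<in> dualV T. f C = True}"
  have "openin (dualV_top T) ?V" by (rule dV_basis_open[OF C(1)])
  moreover have "delta T x \<in> ?V" using C delta_dualV unfolding delta_def by simp
  moreover have "\<forall>x'\<in>topspace T. delta T x' \<in> ?V \<longrightarrow> x' \<in> U"
    using C unfolding delta_def by auto
  ultimately show "\<exists>V. openin (dualV_top T) V \<and> delta T x \<in> V \<and> (\<forall>x'\<in>topspace T. delta T x' \<in> V \<longrightarrow> x' \<in> U)"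
    by blast
qed

lemma beta_app: "f \<in> dualV T \<Longrightarrow> A \<in> clopens T \<Longrightarrow> act_beta T g f A = f (inv g ` A)"
  by (simp add: act_beta_def)
lemma beta_app_out: "f \<in> dualV T \<Longrightarrow> A \<notin> clopens T \<Longrightarrow> act_beta T g f A = False"
  by (simp add: act_beta_def)
lemma beta_out: "f \<notin> dualV T \<Longrightarrow> act_beta T g f = f"
  by (simp add: act_beta_def)

lemma inv_img_symdiff: "g \<in> G \<Longrightarrow> inv g ` (symdiff A B) = symdiff (inv g ` A) (inv g ` B)"
  using G_inj[OF G_inv] by (simp add: symdiff_def image_Un image_set_diff)

lemma beta_dualV: assumes g: "g \<in> G" and f: "f \<in> dualV T" shows "act_beta T g f \<in> dualV T"
proof (rule dualV_I)
  fix A B assume A: "A \<in> clopens T" and B: "B \<in> clopens T"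
  then have "symdiff A B \<in> clopens T" by (rule clopen_symdiff)
  then show "act_beta T g f (symdiff A B) = (act_beta T g f A \<noteq> act_beta T g f B)"
    using A B f g clopen_inv_image dualV_sd[OF f] inv_img_symdiff by (simp add: beta_app)
next
  fix A assume "A \<notin> clopens T" then show "act_beta T g f A = False" using f by (simp add: beta_app_out)
qed

lemma beta_id: "act_beta T id = id"
proof (rule ext)
  fix f show "act_beta T id f = id f"
  proof (cases "f \<in> dualV T")
    case True
    show ?thesis
    proof (rule ext)
      fix A show "act_beta T id f A = id f A"
        using True dualV_out[OF True] by (cases "A \<in> clopens T") (simp_all add: act_beta_def)
    qed
  next
    case False then show ?thesis by (simp add: beta_out)
  qed
qed

lemma beta_comp: assumes g: "g \<in> G" and h: "h \<in> G"
  shows "act_beta T (g \<circ> h) = act_beta T g \<circ> act_beta T h"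
proof (rule ext)
  fix f show "act_beta T (g \<circ> h) f = (act_beta T g \<circ> act_beta T h) f"
  proof (cases "f \<in> dualV T")
    case True
    have hf: "act_beta T h f \<in> dualV T" by (rule beta_dualV[OF h True])
    show ?thesis
    proof (rule ext)
      fix A show "act_beta T (g \<circ> h) f A = (act_beta T g \<circ> act_beta T h) f A"
      proof (cases "A \<in> clopens T")
        case A: True
        have c: "inv g ` A \<in> clopens T" by (rule clopen_inv_image[OF g A])
        have "act_beta T (g \<circ> h) f A = f (inv (g \<circ> h) ` A)" by (rule beta_app[OF True A])
        also have "\<dots> = f (inv h ` (inv g ` A))" using G_comp_inv[OF g h] by (simp add: image_comp)
        also have "\<dots> = act_beta T h f (inv g ` A)" by (rule beta_app[OF True c, symmetric])
        also have "\<dots> = act_beta T g (act_beta T h f) A" by (rule beta_app[OF hf A, symmetric])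
        finally show ?thesis by simp
      next
        case False then show ?thesis using True hf by (simp add: beta_app_out)
      qed
    qed
  next
    case False then show ?thesis by (simp add: beta_out)
  qed
qed

lemma beta_invl: assumes g: "g \<in> G" shows "act_beta T (inv g) \<circ> act_beta T g = id"
proof -
  have "act_beta T (inv g) \<circ> act_beta T g = act_beta T (inv g \<circ> g)"
    by (rule beta_comp[OF G_inv[OF g] g, symmetric])
  also have "\<dots> = id" using G_invl[OF g] beta_id by simp
  finally show ?thesis .
qed
lemma beta_invr: assumes g: "g \<in> G" shows "act_beta T g \<circ> act_beta T (inv g) = id"
proof -
  have "act_beta T g \<circ> act_beta T (inv g) = act_beta T (g \<circ> inv g)"
    by (rule beta_comp[OF g G_inv[OF g], symmetric])
  also have "\<dots> = id" using G_invr[OF g] beta_id by simp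
  finally show ?thesis .
qed
lemma beta_invl' [simp]: "g \<in> G \<Longrightarrow> act_beta T (inv g) (act_beta T g f) = f"
  using fun_cong[OF beta_invl, of g f] by simp
lemma beta_invr' [simp]: "g \<in> G \<Longrightarrow> act_beta T g (act_beta T (inv g) f) = f"
  using fun_cong[OF beta_invr, of g f] by simp
lemma beta_inv_eq: "g \<in> G \<Longrightarrow> inv (act_beta T g) = act_beta T (inv g)"
  by (rule inv_unique_comp[OF beta_invr beta_invl])

lemma beta_single_cont: assumes g: "g \<in> G" shows "continuous_map (dualV_top T) (dualV_top T) (act_beta T g)"
proof (rule cont_into_dV)
  show "\<forall>x\<in>topspace (dualV_top T). act_beta T g x \<in> dualV T" using beta_dualV[OF g] by simp
  fix A b assume A: "A \<in> clopens T"
  have "{x \<in> topspace (dualV_top T). act_beta T g x A = b} = {f \<in> dualV T. f (inv g ` A) = b}"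
    using A beta_app by auto
  then show "openin (dualV_top T) {x \<in> topspace (dualV_top T). act_beta T g x A = b}"
    using dV_basis_open[OF clopen_inv_image[OF g A]] by simp
qed

lemma beta_add: assumes g: "g \<in> G" and f: "f \<in> dualV T" and h: "h \<in> dualV T"
  shows "act_beta T g (dual_add f h) = dual_add (act_beta T g f) (act_beta T g h)"
  using dual_add_dualV[OF f h] f h unfolding act_beta_def dual_add_def by (auto simp: fun_eq_iff)

lemma beta_Aut: assumes g: "g \<in> G" shows "act_beta T g \<in> Aut (dualV_top T) dual_add"
  unfolding Aut_def
proof (intro CollectI conjI ballI allI impI)
  have "homeomorphic_maps (dualV_top T) (dualV_top T) (act_beta T g) (act_beta T (inv g))"
    unfolding homeomorphic_maps_def
    using beta_single_cont[OF g] beta_single_cont[OF G_inv[OF g]] g by simp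
  then show "homeomorphic_map (dualV_top T) (dualV_top T) (act_beta T g)"
    using homeomorphic_map_maps by blast
next
  fix x y assume "x \<in> topspace (dualV_top T)" "y \<in> topspace (dualV_top T)"
  then show "act_beta T g (dual_add x y) = dual_add (act_beta T g x) (act_beta T g y)"
    using beta_add[OF g] by simp
next
  fix y assume "y \<notin> topspace (dualV_top T)"
  then show "act_beta T g y = y" by (simp add: beta_out)
qed

lemma delta_equiv: assumes g: "g \<in> G" and x: "x \<in> topspace T"
  shows "delta T (g x) = act_beta T g (delta T x)"
proof (rule ext)
  fix A show "delta T (g x) A = act_beta T g (delta T x) A"
  proof (cases "A \<in> clopens T")
    case True
    have c: "inv g ` A \<in> clopens T" by (rule clopen_inv_image[OF g True])
    have "(x \<in> inv g ` A) = (g x \<in> A)"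
    proof
      assume "x \<in> inv g ` A" then obtain a where "a \<in> A" "x = inv g a" by blast
      then show "g x \<in> A" using g by simp
    next
      assume "g x \<in> A"
      moreover have "x = inv g (g x)" using g by simp
      ultimately show "x \<in> inv g ` A" by (rule image_eqI[rotated])
    qed
    then show ?thesis using True c delta_dualV by (simp add: beta_app delta_def)
  next
    case False then show ?thesis using delta_dualV by (simp add: beta_app_out delta_def)
  qed
qed

lemma beta_inj: "inj_on (act_beta T) G"
proof (rule inj_onI)
  fix g h assume g: "g \<in> G" and h: "h \<in> G" and e: "act_beta T g = act_beta T h"
  show "g = h"
  proof (rule ext)
    fix x show "g x = h x"
    proof (cases "x \<in> topspace T")
      case True
      have "delta T (g x) = delta T (h x)" using delta_equiv[OF g True] delta_equiv[OF h True] e by simp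
      moreover have "g x \<in> topspace T" "h x \<in> topspace T" using True G_memX g h by auto
      ultimately show ?thesis using delta_inj inj_onD by metis
    next
      case False then show ?thesis using G_out[OF g False] G_out[OF h False] by simp
    qed
  qed
qed

lemma beta_cont:
  "continuous_map (prod_topology (Gtop T G) (dualV_top T)) (dualV_top T) (\<lambda>(g, f). act_beta T g f)"
proof (rule cont_into_dV)
  show "\<forall>x\<in>topspace (prod_topology (Gtop T G) (dualV_top T)). (case x of (g, f) \<Rightarrow> act_beta T g f) \<in> dualV T"
    using beta_dualV by auto
  fix A b assume A: "A \<in> clopens T"
  let ?P = "{x \<in> topspace (prod_topology (Gtop T G) (dualV_top T)). (case x of (g, f) \<Rightarrow> act_beta T g f) A = b}"
  show "openin (prod_topology (Gtop T G) (dualV_top T)) ?P"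
    unfolding openin_prod_topology_alt
  proof (intro allI impI)
    fix g f assume gf: "(g, f) \<in> ?P"
    then have g: "g \<in> G" and f: "f \<in> dualV T" and fb: "f (inv g ` A) = b"
      using A beta_app by auto
    let ?A = "inv g ` A"
    have cA: "?A \<in> clopens T" by (rule clopen_inv_image[OF g A])
    let ?U = "nb g {?A}"
    let ?V = "{f' \<in> dualV T. f' ?A = b}"
    have "?U \<times> ?V \<subseteq> ?P"
    proof
      fix q assume "q \<in> ?U \<times> ?V"
      then obtain g' f' where q: "q = (g', f')" "g' \<in> G" "g' ` ?A = g ` ?A" "f' \<in> dualV T" "f' ?A = b"
        unfolding nb_def by blast
      have "g' ` ?A = A" using q(3) g by simp
      then have "inv g' ` A = ?A" using q(2) G_inv_img_img by metis
      then have "act_beta T g' f' A = b" using q A beta_app by simp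
      then show "q \<in> ?P" using q by simp
    qed
    moreover have "openin (Gtop T G) ?U" using nb_open cA g by simp
    moreover have "openin (dualV_top T) ?V" by (rule dV_basis_open[OF cA])
    moreover have "g \<in> ?U" using nb_self[OF g] .
    moreover have "f \<in> ?V" using f fb by simp
    ultimately show "\<exists>U V. openin (Gtop T G) U \<and> openin (dualV_top T) V \<and> g \<in> U \<and> f \<in> V \<and> U \<times> V \<subseteq> ?P"
      by blast
  qed
qed

end


context stoneG begin

lemma dual_add_cancel [simp]: "dual_add (dual_add u y) y = u"
  unfolding dual_add_def by (auto simp: fun_eq_iff)

lemma trans_mem: "v \<in> (\<lambda>u. dual_add u y) ` W \<longleftrightarrow> dual_add v y \<in> W"
proof
  assume "v \<in> (\<lambda>u. dual_add u y) ` W"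
  then obtain u where "u \<in> W" "v = dual_add u y" by blast
  then show "dual_add v y \<in> W" by simp
next
  assume "dual_add v y \<in> W"
  moreover have "v = dual_add (dual_add v y) y" by simp
  ultimately show "v \<in> (\<lambda>u. dual_add u y) ` W" by (rule rev_image_eqI[where f="\<lambda>u. dual_add u y"])
qed

lemma dual_add_self: "dual_add y y = (\<lambda>A. False)"
  unfolding dual_add_def by simp

lemma aut_zero: assumes h: "h \<in> Aut (dualV_top T) dual_add" shows "h (\<lambda>A. False) = (\<lambda>A. False)"
proof -
  have Z: "(\<lambda>A. False) \<in> topspace (dualV_top T)" using Z_dualV by simp
  have "h (dual_add (\<lambda>A. False) (\<lambda>A. False)) = dual_add (h (\<lambda>A. False)) (h (\<lambda>A. False))"
    by (rule aut_mul[OF h Z Z])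
  then show ?thesis by (simp add: dual_add_self)
qed

lemma add_cont:
  assumes p: "continuous_map (dualV_top T) (dualV_top T) p"
  shows "continuous_map (dualV_top T) (dualV_top T) (\<lambda>y. dual_add (p y) y)"
proof (rule cont_into_dV)
  have pD: "p y \<in> dualV T" if "y \<in> dualV T" for y
    using continuous_map_image_subset_topspace[OF p] that by auto
  show "\<forall>x\<in>topspace (dualV_top T). dual_add (p x) x \<in> dualV T"
    using pD dual_add_dualV by simp
  fix A b assume A: "A \<in> clopens T"
  let ?P = "{x \<in> topspace (dualV_top T). dual_add (p x) x A = b}"
  show "openin (dualV_top T) ?P"
  proof (subst openin_subopen, intro ballI)
    fix y0 assume y0: "y0 \<in> ?P"
    let ?Q1 = "{x \<in> topspace (dualV_top T). p x \<in> {f \<in> dualV T. f A = p y0 A}}"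
    let ?Q2 = "{f \<in> dualV T. f A = y0 A}"
    have o1: "openin (dualV_top T) ?Q1"
      by (rule openin_continuous_map_preimage[OF p dV_basis_open[OF A]])
    have o2: "openin (dualV_top T) ?Q2" by (rule dV_basis_open[OF A])
    have "y0 \<in> ?Q1 \<inter> ?Q2" using y0 pD by simp
    moreover have "?Q1 \<inter> ?Q2 \<subseteq> ?P" using y0 unfolding dual_add_def by auto
    ultimately show "\<exists>T'. openin (dualV_top T) T' \<and> y0 \<in> T' \<and> T' \<subseteq> ?P"
      using openin_Int[OF o1 o2] by blast
  qed
qed

lemma unif:
  assumes K: "compactin (dualV_top T) K" and W: "openin (dualV_top T) W"
    and phi: "continuous_map (dualV_top T) (dualV_top T) \<phi>" and inW: "\<forall>y\<in>K. \<phi> y \<in> W"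
  shows "\<exists>F. finite F \<and> F \<subseteq> clopens T \<and> (\<forall>y\<in>K. box (\<phi> y) F \<subseteq> W)"
proof -
  have "\<forall>y\<in>K. \<exists>F. finite F \<and> F \<subseteq> clopens T \<and> box (\<phi> y) F \<subseteq> W"
    using dV_open_box[OF W] inW by blast
  from bchoice[OF this] obtain Fy where Fy: "\<forall>y\<in>K. finite (Fy y) \<and> Fy y \<subseteq> clopens T \<and> box (\<phi> y) (Fy y) \<subseteq> W"
    by blast
  define Ov where "Ov y = {z \<in> topspace (dualV_top T). \<phi> z \<in> box (\<phi> y) (Fy y)}" for y
  have Oopen: "openin (dualV_top T) (Ov y)" if "y \<in> K" for y
    unfolding Ov_def using Fy that by (intro openin_continuous_map_preimage[OF phi] box_open) auto
  have KD: "K \<subseteq> dualV T" using compactin_subset_topspace[OF K] by simp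
  have phiD: "\<phi> y \<in> dualV T" if "y \<in> dualV T" for y
    using continuous_map_image_subset_topspace[OF phi] that by auto
  have Oself: "y \<in> Ov y" if "y \<in> K" for y
    unfolding Ov_def using that KD phiD box_self by auto
  have "\<forall>U\<in>Ov ` K. openin (dualV_top T) U" using Oopen by blast
  moreover have "K \<subseteq> \<Union>(Ov ` K)" using Oself by blast
  ultimately obtain V where V: "finite V" "V \<subseteq> Ov ` K" "K \<subseteq> \<Union>V"
    using K unfolding compactin_def by meson
  obtain K0 where K0: "K0 \<subseteq> K" "finite K0" "V = Ov ` K0"
    using finite_subset_image[OF V(1) V(2)] by blast
  let ?F = "\<Union>(Fy ` K0)"
  have "finite ?F" using K0 Fy by auto
  moreover have "?F \<subseteq> clopens T" using K0 Fy by auto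
  moreover have "\<forall>y\<in>K. box (\<phi> y) ?F \<subseteq> W"
  proof
    fix y assume y: "y \<in> K"
    then obtain y0 where y0: "y0 \<in> K0" "y \<in> Ov y0" using V(3) K0(3) by blast
    have y0K: "y0 \<in> K" using y0 K0 by blast
    have ag: "\<phi> y A = \<phi> y0 A" if "A \<in> Fy y0" for A
      using y0(2) that unfolding Ov_def box_def by auto
    have "box (\<phi> y) ?F \<subseteq> box (\<phi> y0) (Fy y0)"
    proof
      fix u assume u: "u \<in> box (\<phi> y) ?F"
      have "u A = \<phi> y0 A" if "A \<in> Fy y0" for A
        using u y0(1) that ag[OF that] unfolding box_def by auto
      then show "u \<in> box (\<phi> y0) (Fy y0)" using u unfolding box_def by auto
    qed
    then show "box (\<phi> y) ?F \<subseteq> W" using Fy y0K by blast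
  qed
  ultimately show ?thesis by blast
qed

end


context stoneG begin

lemma aut_cont: "h \<in> Aut Y mul \<Longrightarrow> continuous_map Y Y h"
  using aut_hm homeomorphic_imp_continuous_map by blast

lemma dV_mem: "y \<in> topspace (dualV_top T) \<Longrightarrow> y \<in> dualV T" by simp

lemma ib_cont: "continuous_map (Gtop T G) (birkhoff_top (dualV_top T) dual_add (\<lambda>A. False)) (act_beta T)"
proof (rule cont_birkhoff)
  show "(\<lambda>A. False) \<in> topspace (dualV_top T)" using Z_dualV by simp
  show "\<forall>x\<in>topspace (Gtop T G). act_beta T x \<in> Aut (dualV_top T) dual_add" using beta_Aut by simp
next
  fix h K W assume h: "h \<in> Aut (dualV_top T) dual_add" and K: "compactin (dualV_top T) K"
    and W: "openin (dualV_top T) W" and e: "(\<lambda>A. False) \<in> W"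
  let ?N = "birkhoff_nbhd (dualV_top T) dual_add K W"
  let ?P = "{x \<in> topspace (Gtop T G). act_beta T x \<in> (\<lambda>k. h \<circ> k) ` ?N}"
  have hb: "bij h" by (rule aut_bij[OF h])
  have ih: "inv h \<in> Aut (dualV_top T) dual_add" by (rule aut_inv[OF h])
  have KD: "K \<subseteq> dualV T" using compactin_subset_topspace[OF K] by simp
  have hD: "h y \<in> dualV T" if "y \<in> dualV T" for y using aut_top[OF h, of y] that by simp
  have ihD: "inv h y \<in> dualV T" if "y \<in> dualV T" for y using aut_top[OF ih, of y] that by simp
  show "openin (Gtop T G) ?P"
    unfolding Gtop_open_iff
  proof (intro conjI ballI)
    show "?P \<subseteq> G" by simp
    fix g assume gP: "g \<in> ?P"
    then have g: "g \<in> G" by simp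
    let ?f = "inv h \<circ> act_beta T g"
    have "act_beta T g \<in> (\<lambda>k. h \<circ> k) ` ?N" using gP by simp
    then have fN: "?f \<in> ?N" by (rule comp_image_iff[OF hb, THEN iffD1])
    have fA: "?f \<in> Aut (dualV_top T) dual_add" using fN unfolding birkhoff_nbhd_def by blast
    have invf: "inv ?f y = act_beta T (inv g) (h y)" for y
    proof (rule inv_bij_eq[OF aut_bij[OF fA]])
      show "?f (act_beta T (inv g) (h y)) = y" using g h by simp
    qed
    have fK: "dual_add (?f y) y \<in> W \<and> dual_add (act_beta T (inv g) (h y)) y \<in> W" if "y \<in> K" for y
      using fN that invf unfolding birkhoff_nbhd_def trans_mem by auto
    have cf: "continuous_map (dualV_top T) (dualV_top T) ?f"
      by (rule continuous_map_compose[OF beta_single_cont[OF g] aut_cont[OF ih]])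
    have cb: "continuous_map (dualV_top T) (dualV_top T) (act_beta T (inv g) \<circ> h)"
      by (rule continuous_map_compose[OF aut_cont[OF h] beta_single_cont[OF G_inv[OF g]]])
    obtain Fa where Fa: "finite Fa" "Fa \<subseteq> clopens T" "\<forall>y\<in>K. box (dual_add (?f y) y) Fa \<subseteq> W"
      using unif[OF K W add_cont[OF cf]] fK by (metis (no_types, lifting))
    obtain Fb where Fb: "finite Fb" "Fb \<subseteq> clopens T"
        "\<forall>y\<in>K. box (dual_add ((act_beta T (inv g) \<circ> h) y) y) Fb \<subseteq> W"
      using unif[OF K W add_cont[OF cb]] fK by (metis (no_types, lifting) comp_apply)
    let ?Q = "{u \<in> topspace (dualV_top T). inv h u \<in> box (\<lambda>A. False) Fa}"
    have oQ: "openin (dualV_top T) ?Q"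
      by (rule openin_continuous_map_preimage[OF aut_cont[OF ih] box_open[OF Fa(1) Fa(2)]])
    have "inv h (\<lambda>A. False) = (\<lambda>A. False)" by (rule aut_zero[OF ih])
    then have ZQ: "(\<lambda>A. False) \<in> ?Q" using Z_dualV box_self by simp
    obtain F' where F': "finite F'" "F' \<subseteq> clopens T" "box (\<lambda>A. False) F' \<subseteq> ?Q"
      using dV_open_box[OF oQ ZQ] by blast
    let ?F = "Fb \<union> (\<lambda>A. inv g ` A) ` F'"
    have Ffin: "finite ?F" using Fb F' by simp
    have Fcl: "?F \<subseteq> clopens T" using Fb F' clopen_inv_image[OF g] by auto
    have "nb g ?F \<subseteq> ?P"
    proof
      fix g' assume g'F: "g' \<in> nb g ?F"
      then have g': "g' \<in> G" and eqF: "\<And>A. A \<in> ?F \<Longrightarrow> g' ` A = g ` A" unfolding nb_def by auto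
      have eqinv: "inv g' ` A = inv g ` A" if "A \<in> F'" for A
      proof -
        have "g' ` (inv g ` A) = g ` (inv g ` A)" using eqF that by blast
        then have "g' ` (inv g ` A) = A" using g by simp
        then show ?thesis using G_inv_img_img[OF g'] by metis
      qed
      let ?f' = "inv h \<circ> act_beta T g'"
      have f'A: "?f' \<in> Aut (dualV_top T) dual_add" by (rule aut_comp[OF ih beta_Aut[OF g']])
      have invf': "inv ?f' y = act_beta T (inv g') (h y)" for y
      proof (rule inv_bij_eq[OF aut_bij[OF f'A]])
        show "?f' (act_beta T (inv g') (h y)) = y" using g' h by simp
      qed
      have "?f' \<in> ?N" unfolding birkhoff_nbhd_def
      proof (intro CollectI conjI ballI f'A)
        fix y assume y: "y \<in> K"
        have yD: "y \<in> dualV T" using y KD by blast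
        have bg'D: "act_beta T g' y \<in> dualV T" by (rule beta_dualV[OF g' yD])
        have bgD: "act_beta T g y \<in> dualV T" by (rule beta_dualV[OF g yD])
        let ?u = "dual_add (act_beta T g' y) (act_beta T g y)"
        have uD: "?u \<in> dualV T" by (rule dual_add_dualV[OF bg'D bgD])
        have "?u \<in> box (\<lambda>A. False) F'"
          unfolding box_def
        proof (intro CollectI conjI ballI uD)
          fix A assume A: "A \<in> F'"
          then have Acl: "A \<in> clopens T" using F' by blast
          show "?u A = False"
            using eqinv[OF A] unfolding dual_add_def by (simp add: beta_app[OF yD Acl])
        qed
        then have "?u \<in> ?Q" using F'(3) by blast
        then have iu: "inv h ?u \<in> box (\<lambda>A. False) Fa" by simp
        have "inv h ?u = dual_add (?f' y) (?f y)"
          using aut_mul[OF ih, of "act_beta T g' y" "act_beta T g y"] bg'D bgD by simp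
        then have agree: "?f' y A = ?f y A" if "A \<in> Fa" for A
          using iu that unfolding box_def dual_add_def by auto
        have f'yD: "?f' y \<in> dualV T" using ihD bg'D by simp
        have "dual_add (?f' y) y \<in> box (dual_add (?f y) y) Fa"
          unfolding box_def using agree dual_add_dualV[OF f'yD yD] unfolding dual_add_def by auto
        then have "dual_add (?f' y) y \<in> W" using Fa(3) y by blast
        then show "?f' y \<in> (\<lambda>u. dual_add u y) ` W" unfolding trans_mem .
        have hyD: "h y \<in> dualV T" by (rule hD[OF yD])
        have agree2: "act_beta T (inv g') (h y) A = act_beta T (inv g) (h y) A" if "A \<in> Fb" for A
        proof -
          have Acl: "A \<in> clopens T" using that Fb by blast
          have "inv (inv g') ` A = inv (inv g) ` A"
            using eqF[of A] that inv_inv_eq[OF G_bij[OF g]] inv_inv_eq[OF G_bij[OF g']] by simp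
          then show ?thesis using beta_app[OF hyD Acl] by simp
        qed
        have bD: "act_beta T (inv g') (h y) \<in> dualV T" by (rule beta_dualV[OF G_inv[OF g'] hyD])
        have "dual_add (act_beta T (inv g') (h y)) y \<in> box (dual_add ((act_beta T (inv g) \<circ> h) y) y) Fb"
          unfolding box_def using agree2 dual_add_dualV[OF bD yD] unfolding dual_add_def by auto
        then have "dual_add (act_beta T (inv g') (h y)) y \<in> W" using Fb(3) y by blast
        then show "inv ?f' y \<in> (\<lambda>u. dual_add u y) ` W" unfolding trans_mem invf' .
      qed
      then have "act_beta T g' \<in> (\<lambda>k. h \<circ> k) ` ?N" by (rule comp_image_iff[OF hb, THEN iffD2])
      then show "g' \<in> ?P" using g' by simp
    qed
    then show "\<exists>F. finite F \<and> F \<subseteq> clopens T \<and> nb g F \<subseteq> ?P" using Ffin Fcl by blast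
  qed
qed

end


context stoneG begin

lemma ib_emb: "embedding_map (Gtop T G) (birkhoff_top (dualV_top T) dual_add (\<lambda>A. False)) (act_beta T)"
proof (rule embedding_crit[OF ib_cont])
  show "inj_on (act_beta T) (topspace (Gtop T G))" using beta_inj by simp
next
  fix U g assume U: "openin (Gtop T G) U" and gU: "g \<in> U"
  then have g: "g \<in> G" using openin_subset by fastforce
  obtain F where F: "finite F" "F \<subseteq> clopens T" "nb g F \<subseteq> U"
    using U gU unfolding Gtop_open_iff by meson
  let ?K = "delta T ` topspace T"
  let ?W = "box (\<lambda>A. False) F"
  let ?N = "birkhoff_nbhd (dualV_top T) dual_add ?K ?W"
  let ?V = "(\<lambda>k. act_beta T g \<circ> k) ` ?N"
  have cK: "compactin (dualV_top T) ?K" by (rule image_compactin[OF compact_X delta_cont])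
  have oW: "openin (dualV_top T) ?W" by (rule box_open[OF F(1) F(2)])
  have ZW: "(\<lambda>A. False) \<in> ?W" by (rule box_self[OF Z_dualV])
  have oV: "openin (birkhoff_top (dualV_top T) dual_add (\<lambda>A. False)) ?V"
    by (rule birkhoff_basis_open[OF beta_Aut[OF g] cK oW ZW])
  have hb: "bij (act_beta T g)" by (rule aut_bij[OF beta_Aut[OF g]])
  have idN: "id \<in> ?N" unfolding birkhoff_nbhd_def
  proof (intro CollectI conjI ballI aut_id)
    fix y assume "y \<in> ?K"
    have "dual_add y y \<in> ?W" using ZW by (simp add: dual_add_self)
    then show "id y \<in> (\<lambda>u. dual_add u y) ` ?W" "inv id y \<in> (\<lambda>u. dual_add u y) ` ?W"
      unfolding trans_mem by simp_all
  qed
  have "inv (act_beta T g) \<circ> act_beta T g = id" by (rule inv_o_cancel[OF bij_is_inj[OF hb]])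
  then have "inv (act_beta T g) \<circ> act_beta T g \<in> ?N" using idN by simp
  then have gV: "act_beta T g \<in> ?V" by (rule comp_image_iff[OF hb, THEN iffD2])
  have "\<forall>g'\<in>topspace (Gtop T G). act_beta T g' \<in> ?V \<longrightarrow> g' \<in> U"
  proof (intro ballI impI)
    fix g' assume g': "g' \<in> topspace (Gtop T G)" and V: "act_beta T g' \<in> ?V"
    then have g'G: "g' \<in> G" by simp
    have fN: "inv (act_beta T g) \<circ> act_beta T g' \<in> ?N" using V by (rule comp_image_iff[OF hb, THEN iffD1])
    let ?k = "inv g \<circ> g'"
    have kG: "?k \<in> G" by (rule G_comp[OF G_inv[OF g] g'G])
    have "inv (act_beta T g) \<circ> act_beta T g' = act_beta T ?k"
      using beta_inv_eq[OF g] beta_comp[OF G_inv[OF g] g'G] by simp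
    then have kN: "act_beta T ?k \<in> ?N" using fN by simp
    have kx: "(?k x \<in> A) = (x \<in> A)" if x: "x \<in> topspace T" and A: "A \<in> F" for x A
    proof -
      have Acl: "A \<in> clopens T" using A F(2) by blast
      have "act_beta T ?k (delta T x) \<in> (\<lambda>u. dual_add u (delta T x)) ` ?W"
        using kN x unfolding birkhoff_nbhd_def by blast
      then have "dual_add (act_beta T ?k (delta T x)) (delta T x) \<in> ?W" unfolding trans_mem .
      then have "act_beta T ?k (delta T x) A = delta T x A"
        using A unfolding box_def dual_add_def by auto
      then have "delta T (?k x) A = delta T x A" using delta_equiv[OF kG x] by simp
      then show ?thesis using Acl unfolding delta_def by simp
    qed
    have kA: "?k ` A = A" if A: "A \<in> F" for A
    proof
      have AX: "A \<subseteq> topspace T" using A F(2) clopen_sub by blast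
      show "?k ` A \<subseteq> A" using kx[OF _ A] AX by blast
      show "A \<subseteq> ?k ` A"
      proof
        fix a assume a: "a \<in> A"
        let ?x = "inv ?k a"
        have kxa: "?k ?x = a" using kG by (rule G_f_inv)
        have xX: "?x \<in> topspace T" using G_memX[OF kG, of ?x] kxa a AX by auto
        have "(?k ?x \<in> A) = (?x \<in> A)" by (rule kx[OF xX A])
        then have "?x \<in> A" using kxa a by simp
        then show "a \<in> ?k ` A" using kxa by (metis imageI)
      qed
    qed
    have g'eq: "g \<circ> ?k = g'" using G_invr[OF g] by (simp add: o_assoc)
    have "g' ` A = g ` A" if A: "A \<in> F" for A
    proof -
      have "g' ` A = g ` (?k ` A)" using g'eq by (metis image_comp)
      then show ?thesis using kA[OF A] by simp
    qed
    then have "g' \<in> nb g F" unfolding nb_def using g'G by blast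
    then show "g' \<in> U" using F(3) by blast
  qed
  then show "\<exists>V. openin (birkhoff_top (dualV_top T) dual_add (\<lambda>A. False)) V \<and> act_beta T g \<in> V \<and>
     (\<forall>x'\<in>topspace (Gtop T G). act_beta T x' \<in> V \<longrightarrow> x' \<in> U)" using oV gV by blast
qed

lemma ker: "{g \<in> topspace (Gtop T G). (\<forall>x\<in>topspace (Vtop T). act_alpha T g x = x) \<and>
      (\<forall>f\<in>topspace (dualV_top T). act_beta T g f = f)} = {id}"
proof (intro equalityI subsetI)
  fix g assume "g \<in> {g \<in> topspace (Gtop T G). (\<forall>x\<in>topspace (Vtop T). act_alpha T g x = x) \<and>
      (\<forall>f\<in>topspace (dualV_top T). act_beta T g f = f)}"
  then have g: "g \<in> G" and a: "\<And>A. A \<in> clopens T \<Longrightarrow> act_alpha T g A = A" by auto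
  have "g = id"
  proof (rule G_eqI[OF g G_id])
    fix A assume A: "A \<in> clopens T"
    show "g ` A = id ` A" using a[OF A] alpha_eq[OF A] by simp
  qed
  then show "g \<in> {id}" by simp
next
  fix g :: "'a \<Rightarrow> 'a" assume "g \<in> {id}"
  then show "g \<in> {g \<in> topspace (Gtop T G). (\<forall>x\<in>topspace (Vtop T). act_alpha T g x = x) \<and>
      (\<forall>f\<in>topspace (dualV_top T). act_beta T g f = f)}"
    using G_id alpha_id beta_id by simp
qed

lemma no_coarser:
  "\<not> (\<exists>\<sigma>. hausdorff_group_topology (topspace (Gtop T G)) \<sigma> \<and>
           (\<forall>U. openin \<sigma> U \<longrightarrow> openin (Gtop T G) U) \<and> \<sigma> \<noteq> Gtop T G \<and>
           continuous_map (prod_topology \<sigma> (Vtop T)) (Vtop T) (\<lambda>(g,x). act_alpha T g x) \<and>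
           continuous_map (prod_topology \<sigma> (dualV_top T)) (dualV_top T) (\<lambda>(g,f). act_beta T g f))"
proof
  assume "\<exists>\<sigma>. hausdorff_group_topology (topspace (Gtop T G)) \<sigma> \<and>
           (\<forall>U. openin \<sigma> U \<longrightarrow> openin (Gtop T G) U) \<and> \<sigma> \<noteq> Gtop T G \<and>
           continuous_map (prod_topology \<sigma> (Vtop T)) (Vtop T) (\<lambda>(g,x). act_alpha T g x) \<and>
           continuous_map (prod_topology \<sigma> (dualV_top T)) (dualV_top T) (\<lambda>(g,f). act_beta T g f)"
  then obtain \<sigma> where hg: "hausdorff_group_topology (topspace (Gtop T G)) \<sigma>"
    and sub: "\<forall>U. openin \<sigma> U \<longrightarrow> openin (Gtop T G) U" and ne: "\<sigma> \<noteq> Gtop T G"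
    and ca: "continuous_map (prod_topology \<sigma> (Vtop T)) (Vtop T) (\<lambda>(g,x). act_alpha T g x)"
    by blast
  have ts: "topspace \<sigma> = G" using hg unfolding hausdorff_group_topology_def by simp
  have slice: "openin \<sigma> {g' \<in> G. g' ` A = B}" if A: "A \<in> clopens T" and B: "B \<in> clopens T" for A B
  proof -
    have c1: "continuous_map \<sigma> (prod_topology \<sigma> (Vtop T)) (\<lambda>x. (x, A))"
      using A by (intro continuous_map_pairedI) (simp_all add: continuous_map_id[unfolded id_def])
    have c2: "continuous_map \<sigma> (Vtop T) ((\<lambda>(g,x). act_alpha T g x) \<circ> (\<lambda>x. (x, A)))"
      by (rule continuous_map_compose[OF c1 ca])
    have "openin \<sigma> {x \<in> topspace \<sigma>. ((\<lambda>(g,x). act_alpha T g x) \<circ> (\<lambda>x. (x, A))) x \<in> {B}}"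
      by (rule openin_continuous_map_preimage[OF c2]) (simp add: Vtop_def B)
    moreover have "{x \<in> topspace \<sigma>. ((\<lambda>(g,x). act_alpha T g x) \<circ> (\<lambda>x. (x, A))) x \<in> {B}} = {g' \<in> G. g' ` A = B}"
      using ts alpha_eq[OF A] by auto
    ultimately show ?thesis by simp
  qed
  have "openin \<sigma> U \<longleftrightarrow> openin (Gtop T G) U" for U
  proof
    assume "openin \<sigma> U" then show "openin (Gtop T G) U" using sub by blast
  next
    assume U: "openin (Gtop T G) U"
    show "openin \<sigma> U"
    proof (subst openin_subopen, intro ballI)
      fix g assume gU: "g \<in> U"
      then have g: "g \<in> G" using U openin_subset by fastforce
      obtain F where F: "finite F" "F \<subseteq> clopens T" "nb g F \<subseteq> U"
        using U gU unfolding Gtop_open_iff by meson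
      have "openin \<sigma> ((\<Inter>A\<in>F. {g' \<in> G. g' ` A = g ` A}) \<inter> topspace \<sigma>)"
        using F g by (intro openin_INT slice clopen_image) auto
      moreover have "(\<Inter>A\<in>F. {g' \<in> G. g' ` A = g ` A}) \<inter> topspace \<sigma> = nb g F"
        unfolding nb_def using ts by auto
      ultimately show "\<exists>T'. openin \<sigma> T' \<and> g \<in> T' \<and> T' \<subseteq> U"
        using nb_self[OF g] F(3) by auto
    qed
  qed
  then have "\<sigma> = Gtop T G" using topology_eq by blast
  then show False using ne by blast
qed

lemma biadd: "cont_biadditive (Vtop T) symdiff (dualV_top T) dual_add
        (discrete_topology (UNIV :: bool set)) (\<lambda>a b. a \<noteq> b) eval_w"
  unfolding cont_biadditive_def
proof (intro conjI ballI)
  show "continuous_map (prod_topology (Vtop T) (dualV_top T)) (discrete_topology UNIV) (\<lambda>(x, f). eval_w x f)"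
  proof (rule cont_discrete)
    show "\<forall>x\<in>topspace (prod_topology (Vtop T) (dualV_top T)). (case x of (x, f) \<Rightarrow> eval_w x f) \<in> UNIV" by simp
    show "\<forall>x\<in>topspace (prod_topology (Vtop T) (dualV_top T)). openin (prod_topology (Vtop T) (dualV_top T))
       {y \<in> topspace (prod_topology (Vtop T) (dualV_top T)). (case y of (x, f) \<Rightarrow> eval_w x f) = (case x of (x, f) \<Rightarrow> eval_w x f)}"
    proof
      fix x assume "x \<in> topspace (prod_topology (Vtop T) (dualV_top T))"
      let ?b = "case x of (x, f) \<Rightarrow> eval_w x f"
      let ?P = "{y \<in> topspace (prod_topology (Vtop T) (dualV_top T)). (case y of (x, f) \<Rightarrow> eval_w x f) = ?b}"
      show "openin (prod_topology (Vtop T) (dualV_top T)) ?P"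
        unfolding openin_prod_topology_alt
      proof (intro allI impI)
        fix A f assume Af: "(A, f) \<in> ?P"
        then have A: "A \<in> clopens T" and f: "f \<in> dualV T" and fb: "f A = ?b" by (auto simp: eval_w_def)
        have "{A} \<times> {f' \<in> dualV T. f' A = f A} \<subseteq> ?P" using A fb by (auto simp: eval_w_def)
        moreover have "openin (Vtop T) {A}" using A by (simp add: Vtop_def)
        moreover have "openin (dualV_top T) {f' \<in> dualV T. f' A = f A}" by (rule dV_basis_open[OF A])
        ultimately show "\<exists>U V. openin (Vtop T) U \<and> openin (dualV_top T) V \<and> A \<in> U \<and> f \<in> V \<and> U \<times> V \<subseteq> ?P"
          using f by blast
      qed
    qed
  qed
next
  fix x y f assume "x \<in> topspace (Vtop T)" "y \<in> topspace (Vtop T)" "f \<in> topspace (dualV_top T)"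
  then show "eval_w (symdiff x y) f = (eval_w x f \<noteq> eval_w y f)"
    using dualV_sd by (simp add: eval_w_def)
next
  fix x f h assume "x \<in> topspace (Vtop T)" "f \<in> topspace (dualV_top T)" "h \<in> topspace (dualV_top T)"
  then show "eval_w x (dual_add f h) = (eval_w x f \<noteq> eval_w x h)"
    by (simp add: eval_w_def dual_add_def)
qed

lemma act_alpha_aut: "cont_action_aut (Gtop T G) (Vtop T) symdiff (act_alpha T)"
  unfolding cont_action_aut_def
proof (intro conjI ballI)
  show "continuous_map (prod_topology (Gtop T G) (Vtop T)) (Vtop T) (\<lambda>(g, x). act_alpha T g x)"
    by (rule alpha_cont)
  fix x assume "x \<in> topspace (Vtop T)" then show "act_alpha T id x = x" by (simp add: alpha_id)
next
  fix g h x assume "g \<in> topspace (Gtop T G)" "h \<in> topspace (Gtop T G)" "x \<in> topspace (Vtop T)"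
  then show "act_alpha T (g \<circ> h) x = act_alpha T g (act_alpha T h x)" using alpha_comp by simp
next
  fix g x y assume "g \<in> topspace (Gtop T G)" "x \<in> topspace (Vtop T)" "y \<in> topspace (Vtop T)"
  then show "act_alpha T g (symdiff x y) = symdiff (act_alpha T g x) (act_alpha T g y)"
    using alpha_symdiff by simp
qed

lemma act_beta_aut: "cont_action_aut (Gtop T G) (dualV_top T) dual_add (act_beta T)"
  unfolding cont_action_aut_def
proof (intro conjI ballI)
  show "continuous_map (prod_topology (Gtop T G) (dualV_top T)) (dualV_top T) (\<lambda>(g, x). act_beta T g x)"
    by (rule beta_cont)
  fix x assume "x \<in> topspace (dualV_top T)" then show "act_beta T id x = x" by (simp add: beta_id)
next
  fix g h x assume "g \<in> topspace (Gtop T G)" "h \<in> topspace (Gtop T G)" "x \<in> topspace (dualV_top T)"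
  then show "act_beta T (g \<circ> h) x = act_beta T g (act_beta T h x)" using beta_comp by simp
next
  fix g x y assume "g \<in> topspace (Gtop T G)" "x \<in> topspace (dualV_top T)" "y \<in> topspace (dualV_top T)"
  then show "act_beta T g (dual_add x y) = dual_add (act_beta T g x) (act_beta T g y)"
    using beta_add by simp
qed

lemma invariance: "g \<in> G \<Longrightarrow> A \<in> clopens T \<Longrightarrow> f \<in> dualV T \<Longrightarrow>
   eval_w (act_alpha T g A) (act_beta T g f) = eval_w A f"
  using alpha_clopen beta_app alpha_eq by (simp add: eval_w_def)

lemma main:
    "top_group_embedding (Gtop T G) (birkhoff_top (Vtop T) symdiff {})
        (\<lambda>g A. act_alpha T g A) \<and>
     (embedding_map T (dualV_top T) (delta T) \<and>
      (\<forall>g\<in>G. \<forall>x\<in>topspace T. delta T (g x) = act_beta T g (delta T x))) \<and>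
     (continuous_map (prod_topology (Gtop T G) (dualV_top T)) (dualV_top T)
        (\<lambda>(g, f). act_beta T g f) \<and>
      top_group_embedding (Gtop T G) (birkhoff_top (dualV_top T) dual_add (\<lambda>A. False))
        (\<lambda>g f. act_beta T g f)) \<and>
     t_exact_birep (Gtop T G) (Vtop T) symdiff (dualV_top T) dual_add
        (discrete_topology (UNIV :: bool set)) (\<lambda>a b. a \<noteq> b) eval_w
        (act_alpha T) (act_beta T)"
proof (intro conjI)
  show "top_group_embedding (Gtop T G) (birkhoff_top (Vtop T) symdiff {}) (\<lambda>g A. act_alpha T g A)"
    unfolding top_group_embedding_def using alpha_comp ia_emb by simp
  show "embedding_map T (dualV_top T) (delta T)" by (rule delta_emb)
  show "\<forall>g\<in>G. \<forall>x\<in>topspace T. delta T (g x) = act_beta T g (delta T x)" using delta_equiv by blast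
  show "continuous_map (prod_topology (Gtop T G) (dualV_top T)) (dualV_top T) (\<lambda>(g, f). act_beta T g f)"
    by (rule beta_cont)
  show "top_group_embedding (Gtop T G) (birkhoff_top (dualV_top T) dual_add (\<lambda>A. False)) (\<lambda>g f. act_beta T g f)"
    unfolding top_group_embedding_def using beta_comp ib_emb by simp
  show "t_exact_birep (Gtop T G) (Vtop T) symdiff (dualV_top T) dual_add
        (discrete_topology (UNIV :: bool set)) (\<lambda>a b. a \<noteq> b) eval_w (act_alpha T) (act_beta T)"
    unfolding t_exact_birep_def cont_birep_def
    using biadd act_alpha_aut act_beta_aut invariance ker no_coarser by simp
qed

end

theorem lemma4p3:
  fixes T :: "'a topology" and G :: "('a \<Rightarrow> 'a) set"
  assumes "stone_space T"
    and "topological_subgroup_Homeo T G"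
  shows
    "top_group_embedding (Gtop T G) (birkhoff_top (Vtop T) symdiff {})
        (\<lambda>g A. act_alpha T g A) \<and>
     (embedding_map T (dualV_top T) (delta T) \<and>
      (\<forall>g\<in>G. \<forall>x\<in>topspace T. delta T (g x) = act_beta T g (delta T x))) \<and>
     (continuous_map (prod_topology (Gtop T G) (dualV_top T)) (dualV_top T)
        (\<lambda>(g, f). act_beta T g f) \<and>
      top_group_embedding (Gtop T G) (birkhoff_top (dualV_top T) dual_add (\<lambda>A. False))
        (\<lambda>g f. act_beta T g f)) \<and>
     t_exact_birep (Gtop T G) (Vtop T) symdiff (dualV_top T) dual_add
        (discrete_topology (UNIV :: bool set)) (\<lambda>a b. a \<noteq> b) eval_w
        (act_alpha T) (act_beta T)"
proof -
  interpret stoneG T G using assms by unfold_locales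
  show ?thesis by (rule main)
qed


end
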